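(* Assume (H1) and let $\alpha\in(0,2)$. There is a constant $C_2>0$ such that for every $\theta>1/d$ there exists a $[1,\infty]$-valued random variable $m_0$, finite $\mathbb P$-a.s., such that for $\mathbb P$-a.e. $\omega$, all integers $m>m_0(\omega)$, all $n\in\mathbb N\cap[\theta\log_2(m\log 2),\,m]$ and all $f,g:B_{2^m}\to\mathbb R$, $$\sum_{x\in B_{2^m}}f(x)\Big(g(x)-\oint_{B_{2^m}}g\,d\mu\Big)\le\sum_{z\in\mathbb Z^d_{m,n}}\sum_{x\in B_{2^n}(z)}f(x)\Big(g(x)-\oint_{B_{2^n}(z)}g\,d\mu\Big)+C_2\,\mathscr E^\omega_{B_{2^m}}(g,g)^{1/2}\sum_{k=n}^{m-1}2^{k(d+\alpha)/2}\Big(\sum_{y\in\mathbb Z^d_{m,k}}\Big(\oint_{B_{2^k}(y)}f\,d\mu\Big)^2\Big)^{1/2}.$$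
   Context: Assumption (H1): on a probability space $(\Omega,\mathcal F,\mathbb P)$, $\{w_{x,y}\}$, indexed by unordered pairs of distinct points of $\mathbb Z^d$, are i.i.d. non-negative random variables with $w_{x,y}=w_{y,x}$, $\mathbb E[w_{x,y}]=1$ and $w_{x,y}\le M$ for a constant $M>0$. $\mu$ is counting measure on $\mathbb Z^d$, $B_R(y)=(y+(-R,R]^d)\cap\mathbb Z^d$, $B_R=B_R(0)$, and $\oint_U h\,d\mu=\mu(U)^{-1}\sum_{x\in U}h(x)$. For finite $U$, $\mathscr E^\omega_U(g,g)=\frac12\sum_{x,y\in U,\,x\neq y}(g(x)-g(y))^2\frac{w_{x,y}(\omega)}{|x-y|^{d+\alpha}}$. For integers $n<m$, $\mathbb Z^d_{m,n}=\{z\in B_{2^m}:\ z_i=k_i2^n$ with $k_i$ an odd integer for each $1\le i\le d\}$, and $\mathbb Z^d_{m,m}=\{0\}$ (so $B_{2^m}$ is the disjoint union of $B_{2^n}(z)$, $z\in\mathbb Z^d_{m,n}$). *)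

theory Defs
  imports "HOL-Probability.Probability"
begin

text \<open>Points of Z^d are vectors of type int^'d, d = CARD('d).\<close>

definition box :: "int \<Rightarrow> int^'d \<Rightarrow> (int^'d) set" where
  "box R y = {z. \<forall>i. y$i - R < z$i \<and> z$i \<le> y$i + R}"

definition avg :: "(int^'d) set \<Rightarrow> (int^'d \<Rightarrow> real) \<Rightarrow> real" where
  "avg U h = (\<Sum>x\<in>U. h x) / real (card U)"

definition lnorm :: "int^'d \<Rightarrow> real" where
  "lnorm z = sqrt (\<Sum>i\<in>UNIV. (real_of_int (z$i))\<^sup>2)"

definition edges :: "(int^'d) set set" where
  "edges = {e. \<exists>x y. x \<noteq> y \<and> e = {x, y}}"

definition energy ::
  "((int^'d) set \<Rightarrow> 'w \<Rightarrow> real) \<Rightarrow> 'w \<Rightarrow> real \<Rightarrow> (int^'d) set \<Rightarrow> (int^'d \<Rightarrow> real) \<Rightarrow> real" where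
  "energy W \<omega> \<alpha> U g = (1/2) * (\<Sum>x\<in>U. \<Sum>y\<in>U - {x}.
      (g x - g y)\<^sup>2 * W {x, y} \<omega> / (lnorm (x - y)) powr (real CARD('d) + \<alpha>))"

definition centres :: "nat \<Rightarrow> nat \<Rightarrow> (int^'d) set" where
  "centres m n = (if n < m then
      {z \<in> box (2^m) 0. \<forall>i. \<exists>k::int. odd k \<and> z$i = k * 2^n}
    else {0})"

end

theory Submission
  imports Defs
begin

lemma box_mem: "x \<in> box R y \<longleftrightarrow> (\<forall>i. y$i - R < x$i \<and> x$i \<le> y$i + R)"
  by (simp add: box_def)

lemma box_eq_image: "box R y = vec_lambda ` (PiE UNIV (\<lambda>i. {y$i - R<..y$i + R}))"
proof (rule set_eqI)
  fix x :: "int^'a"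
  show "x \<in> box R y \<longleftrightarrow> x \<in> vec_lambda ` (PiE UNIV (\<lambda>i. {y$i - R<..y$i + R}))"
  proof
    assume "x \<in> box R y"
    then have "vec_nth x \<in> PiE UNIV (\<lambda>i. {y$i - R<..y$i + R})" by (auto simp: box_mem)
    then show "x \<in> vec_lambda ` (PiE UNIV (\<lambda>i. {y$i - R<..y$i + R}))"
      by (metis image_eqI vec_nth_inverse)
  next
    assume "x \<in> vec_lambda ` (PiE UNIV (\<lambda>i. {y$i - R<..y$i + R}))"
    then obtain f where "f \<in> PiE UNIV (\<lambda>i. {y$i - R<..y$i + R})" "x = vec_lambda f" by auto
    then show "x \<in> box R y" by (auto simp: box_mem)
  qed
qed

lemma finite_box[simp]: "finite (box R (y::int^'d))"
  unfolding box_eq_image by (intro finite_imageI finite_PiE) auto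

lemma card_box: "card (box R (y::int^'d)) = nat (2*R) ^ CARD('d)"
proof -
  have "inj_on (vec_lambda :: ('d \<Rightarrow> int) \<Rightarrow> int^'d) (PiE (UNIV::'d set) (\<lambda>i. {y$i - R<..y$i + R}))"
    by (intro inj_onI) (simp add: vec_lambda_inject)
  then have "card (box R y) = card (PiE (UNIV::'d set) (\<lambda>i. {y$i - R<..y$i + R}))"
    unfolding box_eq_image by (rule card_image)
  also have "\<dots> = (\<Prod>i\<in>(UNIV::'d set). nat (2*R))" by (simp add: card_PiE)
  also have "\<dots> = nat (2*R) ^ CARD('d)" by simp
  finally show ?thesis .
qed

lemma card_box_pow: "card (box (2^j) (y::int^'d)) = 2 ^ ((j+1) * CARD('d))"
  by (simp add: card_box nat_mult_distrib nat_power_eq power_mult power_add)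

lemma box_nonempty: "R > 0 \<Longrightarrow> y \<in> box R y"
  by (simp add: box_mem)

lemma coord_cover:
  fixes A Q x :: int
  assumes A: "A > 0" and Q: "Q \<ge> 1" and x1: "-(2*A*Q) < x" and x2: "x \<le> 2*A*Q"
  defines "t \<equiv> (x - 1) div (2*A)"
  shows "-(2*A*Q) < A*(2*t+1) \<and> A*(2*t+1) \<le> 2*A*Q \<and> A*(2*t+1) - A < x \<and> x \<le> A*(2*t+1) + A"
proof -
  have r: "(x-1) div (2*A) * (2*A) + (x-1) mod (2*A) = x - 1" by (rule div_mult_mod_eq)
  have r1: "0 \<le> (x-1) mod (2*A)" "(x-1) mod (2*A) < 2*A" using A by simp_all
  have e: "t * (2*A) = 2*A*t" "2*A*(t+1) = 2*A*t + 2*A" by (simp_all add: algebra_simps)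
  have d1: "2*A*t \<le> x - 1" using r r1 e unfolding t_def by linarith
  have d2: "x - 1 < 2*A*(t+1)" using r r1 e unfolding t_def by linarith
  have "2*A*t < 2*A*Q" using d1 x2 by linarith
  then have tQ: "t < Q" using mult_less_cancel_left_pos[of "2*A" t Q] A by simp
  have "2*A*(-Q) < 2*A*(t+1)" using d2 x1 by (simp add: algebra_simps)
  then have tQ2: "-Q < t + 1" using mult_less_cancel_left_pos[of "2*A" "-Q" "t+1"] A by simp
  have "A*(2*t+1) \<le> A*(2*Q - 1)" using tQ A by (intro mult_left_mono) auto
  moreover have "A*(2*(-Q)+1) \<le> A*(2*t+1)" using tQ2 A by (intro mult_left_mono) auto
  ultimately show ?thesis using d1 d2 A by (auto simp: algebra_simps)
qed



lemma div_uniq_aux: "(0::int) \<le> r \<Longrightarrow> r < b \<Longrightarrow> (b*t + r) div b = t"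
  by simp

lemma coord_unique:
  fixes A z x k :: int
  assumes A: "A > 0" and z: "z = k*A" and k: "odd k" and x1: "z - A < x" and x2: "x \<le> z + A"
  shows "z = A*(2*((x-1) div (2*A))+1)"
proof -
  obtain t where kt: "k = 2*t+1" using k by (metis oddE)
  have z2: "z = 2*A*t + A" using z kt by (simp add: algebra_simps)
  have "x - 1 = (2*A)*t + (x - 1 - 2*A*t)" by simp
  moreover have "0 \<le> x - 1 - 2*A*t" "x - 1 - 2*A*t < 2*A" using x1 x2 z2 by auto
  ultimately have dt: "(x - 1) div (2*A) = t" using div_uniq_aux by metis
  show ?thesis unfolding dt z kt by (simp add: mult.commute)
qed



lemma coord_nest:
  fixes A z y k l :: int
  assumes A: "A > 0" and z: "z = k*A" and k: "odd k" and y: "y = l*(2*A)"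
    and y1: "y - 2*A < z" and y2: "z \<le> y + 2*A"
  shows "y - 2*A \<le> z - A \<and> z + A \<le> y + 2*A"
proof -
  have e: "z - y = A*(k - 2*l)" using z y by (simp add: algebra_simps)
  have "A*(-2) < A*(k - 2*l)" using y1 e by (simp add: algebra_simps)
  then have h1: "-2 < k - 2*l" using mult_less_cancel_left_pos[OF A] by blast
  have "A*(k - 2*l) \<le> A*2" using y2 e by (simp add: algebra_simps)
  then have h2: "k - 2*l \<le> 2" using mult_le_cancel_left_pos[OF A] by blast
  have "odd (k - 2*l)" using k by simp
  then have "k - 2*l = 1 \<or> k - 2*l = -1" using h1 h2 by presburger
  then have "z - y = A \<or> z - y = -A" using e by auto
  then show ?thesis using A by (elim disjE) linarith+
qed



lemma coord_inside:
  fixes A Q z k :: int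
  assumes A: "A > 0" and z: "z = k*A" and k: "odd k" and z1: "-(2*A*Q) < z" and z2: "z \<le> 2*A*Q"
  shows "-(2*A*Q) \<le> z - A \<and> z + A \<le> 2*A*Q"
proof -
  have "A*k \<le> A*(2*Q)" using z z2 by (simp add: algebra_simps)
  then have h2: "k \<le> 2*Q" using mult_le_cancel_left_pos[OF A] by blast
  have "A*(-2*Q) < A*k" using z z1 by (simp add: algebra_simps)
  then have h1: "-2*Q < k" using mult_less_cancel_left_pos[OF A] by blast
  have "k \<noteq> 2*Q" using k by auto
  then have k1: "k \<le> 2*Q - 1" using h2 by linarith
  have "k \<noteq> -2*Q + 1 - 1" using k by auto
  then have k2: "-2*Q + 1 \<le> k" using h1 by linarith
  have m1: "A*k \<le> A*(2*Q - 1)" using A k1 by (intro mult_left_mono) auto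
  have m2: "A*(-2*Q+1) \<le> A*k" using A k2 by (intro mult_left_mono) auto
  have e1: "A*(2*Q - 1) = 2*A*Q - A" "A*(-2*Q+1) = -(2*A*Q) + A" by (simp_all add: algebra_simps)
  have e2: "z = A*k" using z by simp
  show ?thesis using m1 m2 e1 e2 by (smt (verit))
qed

definition cen :: "nat \<Rightarrow> int^'d \<Rightarrow> int^'d" where
  "cen j x = (\<chi> i. 2^j * (2 * ((x$i - 1) div (2 * 2^j)) + 1))"

definition blk :: "nat \<Rightarrow> nat \<Rightarrow> int^'d \<Rightarrow> (int^'d) set" where
  "blk m j x = (if j < m then box (2^j) (cen j x) else box (2^m) 0)"

lemma pow_split: "j < m \<Longrightarrow> 2 * (2::int)^j * 2^(m-j-1) = 2^m"
proof -
  assume "j < m"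
  then have "m = Suc (j + (m-j-1))" by simp
  then have "(2::int)^m = 2^(Suc (j + (m-j-1)))" by metis
  then show ?thesis by (simp add: power_add)
qed

lemma centres_lt: "j < m \<Longrightarrow> z \<in> centres m j \<longleftrightarrow>
   z \<in> box (2^m) 0 \<and> (\<forall>i. \<exists>k::int. odd k \<and> z$i = k * 2^j)"
  by (simp add: centres_def)

lemma cen_in:
  assumes j: "j < m" and x: "x \<in> box (2^m) (0::int^'d)"
  shows "cen j x \<in> centres m j \<and> x \<in> box (2^j) (cen j x)"
proof -
  define A :: int where "A = 2^j"
  define Q :: int where "Q = 2^(m-j-1)"
  have A: "A > 0" and Q: "Q \<ge> 1" by (simp_all add: A_def Q_def)
  have AQ: "2*A*Q = 2^m" using pow_split[OF j] by (simp add: A_def Q_def)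
  have c: "-(2*A*Q) < A*(2*((x$i - 1) div (2*A))+1) \<and> A*(2*((x$i - 1) div (2*A))+1) \<le> 2*A*Q
     \<and> A*(2*((x$i - 1) div (2*A))+1) - A < x$i \<and> x$i \<le> A*(2*((x$i - 1) div (2*A))+1) + A" for i
    using coord_cover[OF A Q, of "x$i"] x AQ by (simp add: box_mem)
  have ce: "cen j x $ i = A*(2*((x$i - 1) div (2*A))+1)" for i by (simp add: cen_def A_def)
  have "cen j x \<in> box (2^m) 0" using c AQ by (simp add: box_mem ce)
  moreover have "\<exists>k::int. odd k \<and> cen j x $ i = k * 2^j" for i
    by (rule exI[of _ "2*((x$i - 1) div (2*A))+1"]) (simp add: ce A_def)
  moreover have "x \<in> box (2^j) (cen j x)" using c by (simp add: box_mem ce A_def)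
  ultimately show ?thesis using j by (simp add: centres_lt)
qed

lemma cen_unique:
  assumes j: "j < m" and z: "z \<in> centres m j" and x: "x \<in> box (2^j) (z::int^'d)"
  shows "z = cen j x"
proof -
  have "z $ i = cen j x $ i" for i
  proof -
    obtain k :: int where k: "odd k" "z$i = k * 2^j" using z j by (auto simp: centres_lt)
    have xi: "z$i - 2^j < x$i" "x$i \<le> z$i + 2^j" using x by (auto simp: box_mem)
    have "z$i = 2^j*(2*((x$i-1) div (2*2^j))+1)"
      by (rule coord_unique[of "2^j" "z$i" k]) (use k xi in auto)
    then show ?thesis by (simp add: cen_def)
  qed
  then show ?thesis by (simp add: vec_eq_iff)
qed

lemma centre_box_sub:
  assumes j: "j < m" and z: "z \<in> centres m j"
  shows "box (2^j) z \<subseteq> box (2^m) (0::int^'d)"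
proof
  fix x assume x: "x \<in> box (2^j) z"
  define A :: int where "A = 2^j"
  define Q :: int where "Q = 2^(m-j-1)"
  have A: "A > 0" by (simp add: A_def)
  have AQ: "2*A*Q = 2^m" using pow_split[OF j] by (simp add: A_def Q_def)
  have "-(2^m) < x$i \<and> x$i \<le> 2^m" for i
  proof -
    obtain k :: int where k: "odd k" "z$i = k * A" using z j by (auto simp: centres_lt A_def)
    have zb: "-(2*A*Q) < z$i" "z$i \<le> 2*A*Q" using z j AQ by (auto simp: centres_lt box_mem)
    have "-(2*A*Q) \<le> z$i - A \<and> z$i + A \<le> 2*A*Q" by (rule coord_inside[OF A k(2) k(1) zb])
    moreover have "z$i - A < x$i" "x$i \<le> z$i + A" using x by (auto simp: box_mem A_def)
    ultimately show ?thesis using AQ by linarith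
  qed
  then show "x \<in> box (2^m) 0" by (simp add: box_mem)
qed

lemma centre_nest:
  assumes k: "Suc k < m" and z: "z \<in> centres m k"
  shows "box (2^k) z \<subseteq> box (2^(Suc k)) (cen (Suc k) (z::int^'d))"
proof
  fix x assume x: "x \<in> box (2^k) z"
  have zU: "z \<in> box (2^m) 0" using z k by (simp add: centres_lt)
  have y: "cen (Suc k) z \<in> centres m (Suc k)" "z \<in> box (2^(Suc k)) (cen (Suc k) z)"
    using cen_in[OF k zU] by auto
  define A :: int where "A = 2^k"
  have A: "A > 0" by (simp add: A_def)
  have "cen (Suc k) z $ i - 2^Suc k < x$i \<and> x$i \<le> cen (Suc k) z $ i + 2^Suc k" for i
  proof -
    obtain a :: int where a: "odd a" "z$i = a * A" using z k by (auto simp: centres_lt A_def)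
    obtain l :: int where l: "odd l" "cen (Suc k) z $ i = l * 2^Suc k" using y(1) k by (auto simp: centres_lt)
    have l2: "cen (Suc k) z $ i = l * (2*A)" using l by (simp add: A_def)
    have yb: "cen (Suc k) z $ i - 2*A < z$i" "z$i \<le> cen (Suc k) z $ i + 2*A"
      using y(2) by (auto simp: box_mem A_def)
    have "cen (Suc k) z $ i - 2*A \<le> z$i - A \<and> z$i + A \<le> cen (Suc k) z $ i + 2*A"
      by (rule coord_nest[OF A a(2) a(1) l2 yb])
    moreover have "z$i - A < x$i" "x$i \<le> z$i + A" using x by (auto simp: box_mem A_def)
    ultimately show ?thesis by (simp add: A_def)
  qed
  then show "x \<in> box (2^(Suc k)) (cen (Suc k) z)" by (simp add: box_mem)
qed

lemma centres_sub: "centres m j \<subseteq> box (2^m) (0::int^'d)"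
  by (auto simp: centres_def box_mem)

lemma finite_centres[simp]: "finite (centres m j :: (int^'d) set)"
  by (rule finite_subset[OF centres_sub finite_box])

lemma blk_props:
  assumes x: "x \<in> box (2^m) (0::int^'d)" and j: "j \<le> m"
  shows "x \<in> blk m j x" "blk m j x \<subseteq> box (2^m) 0"
    "\<exists>y\<in>centres m j. blk m j x = box (2^j) y"
proof -
  show "x \<in> blk m j x"
    using cen_in[of j m x] x by (auto simp: blk_def)
  show "blk m j x \<subseteq> box (2^m) 0"
    using cen_in[of j m x] centre_box_sub[of j m] x by (auto simp: blk_def)
  show "\<exists>y\<in>centres m j. blk m j x = box (2^j) y"
  proof (cases "j < m")
    case True then show ?thesis using cen_in[OF True x] by (auto simp: blk_def)
  next
    case False then have "j = m" using j by simp
    then show ?thesis by (auto simp: blk_def centres_def)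
  qed
qed

lemma blk_eq:
  assumes x: "x \<in> box (2^m) (0::int^'d)" and u: "u \<in> blk m j x"
  shows "blk m j u = blk m j x"
proof (cases "j < m")
  case True
  have "cen j x \<in> centres m j" using cen_in[OF True x] by auto
  then have "cen j x = cen j u" using cen_unique[OF True] u True by (auto simp: blk_def)
  then show ?thesis by (simp add: blk_def)
qed (simp add: blk_def)

lemma blk_nest:
  assumes x: "x \<in> box (2^m) (0::int^'d)" and k: "k < m"
  shows "blk m k x \<subseteq> blk m (Suc k) x"
proof (cases "Suc k < m")
  case True
  have c: "cen k x \<in> centres m k" "x \<in> box (2^k) (cen k x)" using cen_in[OF k x] by auto
  have s: "box (2^k) (cen k x) \<subseteq> box (2^(Suc k)) (cen (Suc k) (cen k x))"
    by (rule centre_nest[OF True c(1)])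
  have c2: "cen (Suc k) (cen k x) \<in> centres m (Suc k)"
    using cen_in[OF True] centres_sub c(1) by blast
  have "cen (Suc k) (cen k x) = cen (Suc k) x"
    by (rule cen_unique[OF True c2]) (use s c(2) in blast)
  then show ?thesis using s k True by (simp add: blk_def)
next
  case False
  then have "Suc k = m" using k by simp
  then show ?thesis using centre_box_sub[of k m "cen k x"] cen_in[OF k x] k by (auto simp: blk_def)
qed

lemma card_blk:
  assumes x: "x \<in> box (2^m) (0::int^'d)" and j: "j \<le> m"
  shows "card (blk m j x) = 2 ^ ((j+1) * CARD('d))"
  using blk_props(3)[OF x j] card_box_pow by metis

lemma sum_centres:
  fixes F :: "(int^'d) set \<Rightarrow> int^'d \<Rightarrow> 'b::comm_monoid_add"
  assumes j: "j \<le> m"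
  shows "(\<Sum>z\<in>centres m j. \<Sum>x\<in>box (2^j) z. F (box (2^j) z) x)
       = (\<Sum>x\<in>box (2^m) (0::int^'d). F (blk m j x) x)"
proof (cases "j < m")
  case True
  have U: "box (2^m) 0 = (\<Union>z\<in>centres m j. box (2^j) z)"
  proof
    show "box (2^m) 0 \<subseteq> (\<Union>z\<in>centres m j. box (2^j) z)" using cen_in[OF True] by blast
    show "(\<Union>z\<in>centres m j. box (2^j) z) \<subseteq> box (2^m) 0" using centre_box_sub[OF True] by blast
  qed
  have disj: "\<forall>z\<in>centres m j. \<forall>z'\<in>centres m j. z \<noteq> z' \<longrightarrow> box (2^j) z \<inter> box (2^j) z' = {}"
    using cen_unique[OF True] by blast
  have "(\<Sum>x\<in>box (2^m) 0. F (blk m j x) x) = (\<Sum>z\<in>centres m j. \<Sum>x\<in>box (2^j) z. F (blk m j x) x)"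
    unfolding U by (rule sum.UNION_disjoint[OF finite_centres _ disj]) auto
  also have "\<dots> = (\<Sum>z\<in>centres m j. \<Sum>x\<in>box (2^j) z. F (box (2^j) z) x)"
  proof (intro sum.cong refl)
    fix z x :: "int^'d" assume z: "z \<in> centres m j" and x: "x \<in> box (2^j) z"
    then have "z = cen j x" using cen_unique[OF True] by blast
    then show "F (blk m j x) x = F (box (2^j) z) x" using True by (simp add: blk_def)
  qed
  finally show ?thesis by simp
next
  case False
  then have "j = m" using j by simp
  then show ?thesis by (simp add: centres_def blk_def)
qed

lemma sum_eq_card_avg: "finite S \<Longrightarrow> (\<Sum>x\<in>S. g x) = real (card S) * avg S g"
  by (cases "card S = 0") (auto simp: avg_def)

lemma sq_avg_le:
  fixes S :: "(int^'d) set"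
  assumes fin: "finite S" and ne: "S \<noteq> {}"
  shows "real (card S) * (avg S g - A)\<^sup>2 \<le> (\<Sum>x\<in>S. (g x - A)\<^sup>2)"
proof -
  have N: "real (card S) > 0" using fin ne by (simp add: card_gt_0_iff)
  have s: "(\<Sum>x\<in>S. 1 * (g x - A)) = real (card S) * (avg S g - A)"
    using fin N by (simp add: sum_subtractf avg_def algebra_simps)
  have "(\<Sum>x\<in>S. 1 * (g x - A))\<^sup>2 \<le> (\<Sum>x\<in>S. 1\<^sup>2) * (\<Sum>x\<in>S. (g x - A)\<^sup>2)"
    by (rule Cauchy_Schwarz_ineq_sum)
  then have "real (card S) * (real (card S) * (avg S g - A)\<^sup>2) \<le> real (card S) * (\<Sum>x\<in>S. (g x - A)\<^sup>2)"
    unfolding s by (simp add: power2_eq_square algebra_simps)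
  then show ?thesis using N by (simp add: mult_le_cancel_left_pos)
qed

lemma var_le:
  fixes S :: "(int^'d) set"
  assumes fin: "finite S" and ne: "S \<noteq> {}"
  shows "real (card S) * (\<Sum>x\<in>S. (g x - avg S g)\<^sup>2) \<le> (\<Sum>x\<in>S. \<Sum>u\<in>S. (g x - g u)\<^sup>2)"
proof -
  have "real (card S) * (g x - avg S g)\<^sup>2 \<le> (\<Sum>u\<in>S. (g x - g u)\<^sup>2)" for x
  proof -
    have "real (card S) * (avg S g - g x)\<^sup>2 \<le> (\<Sum>u\<in>S. (g u - g x)\<^sup>2)" by (rule sq_avg_le[OF fin ne])
    then show ?thesis by (simp add: power2_commute)
  qed
  then show ?thesis by (simp add: sum_distrib_left sum_mono)
qed

lemma sq_diff_le: "((a::real) - b)\<^sup>2 \<le> 2 * (a - z)\<^sup>2 + 2 * (b - z)\<^sup>2"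
proof -
  have "0 \<le> (a + b - 2*z)\<^sup>2" by simp
  then show ?thesis by (simp add: power2_eq_square algebra_simps)
qed

lemma poincare:
  fixes P :: "(int^'d) set" and w :: "(int^'d) set \<Rightarrow> real" and g :: "int^'d \<Rightarrow> real"
  assumes fin: "finite P" and c: "c > 0" and \<delta>: "\<delta> > 0"
    and wpos: "\<forall>x\<in>P. \<forall>z\<in>P. x \<noteq> z \<longrightarrow> 0 \<le> w {x,z}"
    and good: "\<forall>x\<in>P. \<forall>u\<in>P. x \<noteq> u \<longrightarrow> \<delta> * real (card P) \<le> real (card {z\<in>P-{x,u}. c \<le> w {x,z} \<and> c \<le> w {z,u}})"
  shows "(\<Sum>x\<in>P. \<Sum>u\<in>P. (g x - g u)\<^sup>2) \<le> 4/(c*\<delta>) * (\<Sum>x\<in>P. \<Sum>z\<in>P-{x}. w {x,z} * (g x - g z)\<^sup>2)"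
proof (cases "P = {}")
  case True then show ?thesis by simp
next
  case ne: False
  define h where "h x = (\<Sum>z\<in>P-{x}. w {x,z} * (g x - g z)\<^sup>2)" for x
  define N where "N = real (card P)"
  have N: "N > 0" using fin ne by (simp add: N_def card_gt_0_iff)
  have hpos: "x \<in> P \<Longrightarrow> 0 \<le> h x" for x unfolding h_def using wpos by (intro sum_nonneg) auto
  have key: "(g x - g u)\<^sup>2 \<le> 2/(c*\<delta>*N) * (h x + h u)" if x: "x \<in> P" and u: "u \<in> P" for x u
  proof (cases "x = u")
    case True then show ?thesis using hpos[OF x] c \<delta> N by simp
  next
    case xu: False
    define S where "S = {z\<in>P-{x,u}. c \<le> w {x,z} \<and> c \<le> w {z,u}}"
    have Sfin: "finite S" using fin by (simp add: S_def)
    have Sc: "\<delta> * N \<le> real (card S)" using good x u xu by (simp add: S_def N_def)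
    have Spos: "real (card S) > 0" using Sc \<delta> N by (smt (verit) mult_pos_pos)
    have "real (card S) * (g x - g u)\<^sup>2 = (\<Sum>z\<in>S. (g x - g u)\<^sup>2)" by simp
    also have "\<dots> \<le> (\<Sum>z\<in>S. 2/c * (w {x,z} * (g x - g z)\<^sup>2) + 2/c * (w {u,z} * (g u - g z)\<^sup>2))"
    proof (rule sum_mono)
      fix z assume z: "z \<in> S"
      have wz: "c \<le> w {x,z}" "c \<le> w {u,z}" using z by (auto simp: S_def insert_commute)
      have "c * (g x - g z)\<^sup>2 \<le> w {x,z} * (g x - g z)\<^sup>2" using wz by (intro mult_right_mono) auto
      then have a: "(g x - g z)\<^sup>2 \<le> 1/c * (w {x,z} * (g x - g z)\<^sup>2)" using c by (simp add: field_simps)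
      have "c * (g u - g z)\<^sup>2 \<le> w {u,z} * (g u - g z)\<^sup>2" using wz by (intro mult_right_mono) auto
      then have b: "(g u - g z)\<^sup>2 \<le> 1/c * (w {u,z} * (g u - g z)\<^sup>2)" using c by (simp add: field_simps)
      show "(g x - g u)\<^sup>2 \<le> 2/c * (w {x,z} * (g x - g z)\<^sup>2) + 2/c * (w {u,z} * (g u - g z)\<^sup>2)"
        using sq_diff_le[of "g x" "g u" "g z"] a b by simp
    qed
    also have "\<dots> = 2/c * ((\<Sum>z\<in>S. w {x,z} * (g x - g z)\<^sup>2) + (\<Sum>z\<in>S. w {u,z} * (g u - g z)\<^sup>2))"
      by (simp add: sum.distrib sum_distrib_left algebra_simps)
    also have "\<dots> \<le> 2/c * (h x + h u)"
    proof -
      have "(\<Sum>z\<in>S. w {x,z} * (g x - g z)\<^sup>2) \<le> h x" unfolding h_def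
        using fin wpos x by (intro sum_mono2) (auto simp: S_def)
      moreover have "(\<Sum>z\<in>S. w {u,z} * (g u - g z)\<^sup>2) \<le> h u" unfolding h_def
        using fin wpos u by (intro sum_mono2) (auto simp: S_def)
      ultimately show ?thesis using c by (intro mult_left_mono) auto
    qed
    finally have A: "real (card S) * (g x - g u)\<^sup>2 \<le> 2/c * (h x + h u)" .
    have "\<delta> * N * (g x - g u)\<^sup>2 \<le> real (card S) * (g x - g u)\<^sup>2"
      using Sc by (intro mult_right_mono) auto
    then have "\<delta> * N * (g x - g u)\<^sup>2 \<le> 2/c * (h x + h u)" using A by linarith
    then show ?thesis using \<delta> N c by (simp add: field_simps)
  qed
  define K where "K = 2/(c*\<delta>*N)"
  have "(\<Sum>x\<in>P. \<Sum>u\<in>P. (g x - g u)\<^sup>2) \<le> (\<Sum>x\<in>P. \<Sum>u\<in>P. K * (h x + h u))"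
    using key unfolding K_def by (intro sum_mono) auto
  also have "\<dots> = (\<Sum>x\<in>P. K * (N * h x + (\<Sum>u\<in>P. h u)))"
  proof (rule sum.cong[OF refl])
    fix x
    have e: "(\<Sum>u\<in>P. h x + h u) = N * h x + (\<Sum>u\<in>P. h u)" by (simp add: sum.distrib N_def)
    have "(\<Sum>u\<in>P. K * (h x + h u)) = K * (\<Sum>u\<in>P. h x + h u)" by (rule sum_distrib_left[symmetric])
    then show "(\<Sum>u\<in>P. K * (h x + h u)) = K * (N * h x + (\<Sum>u\<in>P. h u))" using e by simp
  qed
  also have "\<dots> = K * (\<Sum>x\<in>P. (N * h x + (\<Sum>u\<in>P. h u)))" by (rule sum_distrib_left[symmetric])
  also have "(\<Sum>x\<in>P. (N * h x + (\<Sum>u\<in>P. h u))) = N * (\<Sum>x\<in>P. h x) + N * (\<Sum>u\<in>P. h u)"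
    by (simp add: sum.distrib sum_distrib_left N_def)
  also have "K * (N * (\<Sum>x\<in>P. h x) + N * (\<Sum>u\<in>P. h u)) = 4/(c*\<delta>) * (\<Sum>x\<in>P. h x)"
    using N unfolding K_def by (simp add: field_simps)
  finally show ?thesis by (simp add: h_def)
qed

lemma lnorm_le:
  assumes x: "x \<in> box R y" and z: "z \<in> box R (y::int^'d)"
  shows "lnorm (x - z) \<le> sqrt (real CARD('d) * (2 * real_of_int R)\<^sup>2)"
proof -
  have "(real_of_int ((x - z)$i))\<^sup>2 \<le> (2 * real_of_int R)\<^sup>2" for i
  proof -
    have "\<bar>x$i - z$i\<bar> \<le> 2*R" using x z by (auto simp: box_mem abs_le_iff) (smt (verit))+
    then have "real_of_int \<bar>x$i - z$i\<bar> \<le> real_of_int (2*R)" by (simp only: of_int_le_iff)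
    then have "\<bar>real_of_int ((x - z)$i)\<bar> \<le> \<bar>2 * real_of_int R\<bar>" by (simp only: vector_minus_component of_int_abs)
    then show ?thesis by (simp add: abs_le_square_iff)
  qed
  then have "(\<Sum>i\<in>UNIV. (real_of_int ((x - z)$i))\<^sup>2) \<le> (\<Sum>i\<in>(UNIV::'d set). (2 * real_of_int R)\<^sup>2)"
    by (intro sum_mono) auto
  then show ?thesis unfolding lnorm_def by (intro real_sqrt_le_mono) simp
qed

lemma lnorm_pos:
  assumes "x \<noteq> (z::int^'d)"
  shows "0 < lnorm (x - z)"
proof -
  obtain i where i: "x$i \<noteq> z$i" using assms by (auto simp: vec_eq_iff)
  have "0 < (\<Sum>i\<in>UNIV. (real_of_int ((x - z)$i))\<^sup>2)"
    by (rule sum_pos2[of UNIV i]) (use i in auto)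
  then show ?thesis unfolding lnorm_def by simp
qed

lemma h_le_energy:
  fixes P :: "(int^'d) set"
  assumes fin: "finite P" and \<alpha>: "0 \<le> \<alpha>"
    and H: "\<forall>x\<in>P. \<forall>z\<in>P. x \<noteq> z \<longrightarrow> 0 \<le> W {x,z} \<omega> \<and> lnorm (x - z) \<le> D"
  shows "(\<Sum>x\<in>P. \<Sum>z\<in>P-{x}. W {x,z} \<omega> * (g x - g z)\<^sup>2)
     \<le> 2 * D powr (real CARD('d) + \<alpha>) * energy W \<omega> \<alpha> P g"
proof -
  let ?s = "real CARD('d) + \<alpha>"
  have "W {x,z} \<omega> * (g x - g z)\<^sup>2 \<le> D powr ?s * ((g x - g z)\<^sup>2 * W {x,z} \<omega> / lnorm (x - z) powr ?s)"
    if x: "x \<in> P" and z: "z \<in> P - {x}" for x z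
  proof -
    have xz: "x \<noteq> z" using z by auto
    have L: "0 < lnorm (x - z) powr ?s" using lnorm_pos[OF xz] by simp
    have "lnorm (x - z) powr ?s \<le> D powr ?s"
      using H x z lnorm_pos[OF xz] \<alpha> by (intro powr_mono2) auto
    moreover have t: "0 \<le> W {x,z} \<omega> * (g x - g z)\<^sup>2" using H x z by auto
    ultimately have "W {x,z} \<omega> * (g x - g z)\<^sup>2 * lnorm (x - z) powr ?s \<le> W {x,z} \<omega> * (g x - g z)\<^sup>2 * D powr ?s"
      by (intro mult_left_mono) auto
    then show ?thesis using L by (simp add: field_simps)
  qed
  then have "(\<Sum>x\<in>P. \<Sum>z\<in>P-{x}. W {x,z} \<omega> * (g x - g z)\<^sup>2)
      \<le> (\<Sum>x\<in>P. \<Sum>z\<in>P-{x}. D powr ?s * ((g x - g z)\<^sup>2 * W {x,z} \<omega> / lnorm (x - z) powr ?s))"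
    by (intro sum_mono) auto
  also have "\<dots> = 2 * D powr ?s * energy W \<omega> \<alpha> P g"
    by (simp add: energy_def sum_distrib_left)
  finally show ?thesis .
qed

lemma energy_blocks:
  assumes j: "j \<le> m" and W: "\<forall>x\<in>box (2^m) 0. \<forall>z\<in>box (2^m) (0::int^'d). x \<noteq> z \<longrightarrow> 0 \<le> W {x,z} \<omega>"
  shows "(\<Sum>y\<in>centres m j. energy W \<omega> \<alpha> (box (2^j) y) g) \<le> energy W \<omega> \<alpha> (box (2^m) (0::int^'d)) g"
proof -
  let ?t = "\<lambda>x z. (g x - g z)\<^sup>2 * W {x,z} \<omega> / (lnorm (x - z)) powr (real CARD('d) + \<alpha>)"
  have "(\<Sum>y\<in>centres m j. energy W \<omega> \<alpha> (box (2^j) y) g)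
     = 1/2 * (\<Sum>y\<in>centres m j. \<Sum>x\<in>box (2^j) y. \<Sum>z\<in>box (2^j) y - {x}. ?t x z)"
    by (simp add: energy_def sum_distrib_left)
  also have "(\<Sum>y\<in>centres m j. \<Sum>x\<in>box (2^j) y. \<Sum>z\<in>box (2^j) y - {x}. ?t x z)
     = (\<Sum>x\<in>box (2^m) 0. \<Sum>z\<in>blk m j x - {x}. ?t x z)"
    by (rule sum_centres[OF j, where F="\<lambda>B x. \<Sum>z\<in>B - {x}. ?t x z"])
  also have "\<dots> \<le> (\<Sum>x\<in>box (2^m) 0. \<Sum>z\<in>box (2^m) 0 - {x}. ?t x z)"
  proof (rule sum_mono)
    fix x assume x: "x \<in> box (2^m) (0::int^'d)"
    show "(\<Sum>z\<in>blk m j x - {x}. ?t x z) \<le> (\<Sum>z\<in>box (2^m) 0 - {x}. ?t x z)"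
      using blk_props(2)[OF x j] W x by (intro sum_mono2) (auto intro!: divide_nonneg_nonneg)
  qed
  finally show ?thesis by (simp add: energy_def)
qed

definition good_blk :: "((int^'d) set \<Rightarrow> 'w \<Rightarrow> real) \<Rightarrow> 'w \<Rightarrow> real \<Rightarrow> real \<Rightarrow> (int^'d) set \<Rightarrow> bool" where
  "good_blk W \<omega> c \<delta> P \<longleftrightarrow> (\<forall>x\<in>P. \<forall>u\<in>P. x \<noteq> u \<longrightarrow>
     \<delta> * real (card P) \<le> real (card {z\<in>P-{x,u}. c \<le> W {x,z} \<omega> \<and> c \<le> W {z,u} \<omega>}))"

lemma centre_box_sub':
  assumes j: "j \<le> m" and z: "z \<in> centres m j"
  shows "box (2^j) z \<subseteq> box (2^m) (0::int^'d)"
proof (cases "j < m")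
  case True then show ?thesis using centre_box_sub[OF True z] by simp
next
  case False then have "j = m" using j by simp
  then show ?thesis using z by (simp add: centres_def)
qed

lemma blk_centre_self:
  assumes k: "k < m" and z: "z \<in> centres m k"
  shows "blk m k z = box (2^k) (z::int^'d)"
proof -
  have "z \<in> box (2^k) z" by (simp add: box_nonempty)
  then have "z = cen k z" using cen_unique[OF k z] by simp
  then show ?thesis using k by (simp add: blk_def)
qed

lemma blk_parent:
  assumes k: "k < m" and z: "z \<in> centres m k" and x: "x \<in> box (2^k) (z::int^'d)"
  shows "blk m (Suc k) x = blk m (Suc k) z"
proof -
  have zU: "z \<in> box (2^m) 0" using centres_sub z by blast
  have "x \<in> blk m (Suc k) z" using blk_nest[OF zU k] blk_centre_self[OF k z] x by blast
  then show ?thesis by (rule blk_eq[OF zU])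
qed

lemma final_alg:
  fixes T F G E Bk c \<delta> s dd D :: real and k d :: nat
  assumes T: "T \<le> sqrt (Bk\<^sup>2 * F) * sqrt G"
    and G: "G \<le> 8 * D powr s * E / (c * \<delta> * (Bk * 2^d) * Bk)"
    and D: "D = 4 * sqrt dd * 2^k"
    and pos: "Bk > 0" "c > 0" "\<delta> > 0" "F \<ge> 0" "E \<ge> 0" "G \<ge> 0" "dd > 0"
  shows "T \<le> sqrt (8 * (4 * sqrt dd) powr s / (c * \<delta> * 2^d)) * sqrt E * (2 powr (real k * s / 2) * sqrt F)"
proof -
  have Ds: "D powr s = (4 * sqrt dd) powr s * 2 powr (real k * s)"
    unfolding D using pos by (simp add: powr_mult powr_realpow[symmetric] powr_powr)
  have "sqrt G \<le> sqrt (8 * D powr s * E / (c * \<delta> * (Bk * 2^d) * Bk))" using G by simp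
  then have "T \<le> Bk * sqrt F * sqrt (8 * D powr s * E / (c * \<delta> * (Bk * 2^d) * Bk))"
    using T pos by (smt (verit) mult_left_mono real_sqrt_ge_zero real_sqrt_mult real_sqrt_abs abs_of_pos mult_nonneg_nonneg)
  also have "\<dots> = sqrt F * sqrt (Bk\<^sup>2 * (8 * D powr s * E / (c * \<delta> * (Bk * 2^d) * Bk)))"
  proof -
    define Y where "Y = 8 * D powr s * E / (c * \<delta> * (Bk * 2^d) * Bk)"
    have "sqrt (Bk\<^sup>2 * Y) = Bk * sqrt Y" using pos by (simp only: real_sqrt_mult real_sqrt_abs)
    then show ?thesis unfolding Y_def[symmetric] by simp
  qed
  also have "Bk\<^sup>2 * (8 * D powr s * E / (c * \<delta> * (Bk * 2^d) * Bk))
      = (8 * (4 * sqrt dd) powr s / (c * \<delta> * 2^d)) * E * 2 powr (real k * s)"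
    using pos unfolding Ds by (simp add: power2_eq_square field_simps)
  also have "sqrt ((8 * (4 * sqrt dd) powr s / (c * \<delta> * 2^d)) * E * 2 powr (real k * s))
     = sqrt (8 * (4 * sqrt dd) powr s / (c * \<delta> * 2^d)) * sqrt E * 2 powr (real k * s / 2)"
  proof -
    define X where "X = 8 * (4 * sqrt dd) powr s / (c * \<delta> * 2^d)"
    have "sqrt (2 powr (real k * s)) = 2 powr (real k * s / 2)"
      by (simp add: powr_half_sqrt[symmetric] powr_powr)
    moreover have "sqrt (X * E * 2 powr (real k * s)) = sqrt X * sqrt E * sqrt (2 powr (real k * s))"
      by (simp add: real_sqrt_mult)
    ultimately show ?thesis unfolding X_def[symmetric] by simp
  qed
  finally show ?thesis by (simp add: algebra_simps)
qed

lemma div_helper: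
  fixes N c \<delta> S A EP :: real
  assumes "N > 0" "c > 0" "\<delta> > 0" "N * S \<le> A * EP / (c*\<delta>)"
  shows "S \<le> A / (c*\<delta>*N) * EP"
proof -
  have "N * S * (c*\<delta>) \<le> A * EP" using assms by (simp add: pos_le_divide_eq)
  then show ?thesis using assms by (simp add: pos_le_divide_eq mult.commute mult.left_commute)
qed

lemma energy_nonneg:
  assumes "\<forall>x\<in>P. \<forall>z\<in>P. x \<noteq> z \<longrightarrow> 0 \<le> W {x,z} \<omega>"
  shows "0 \<le> energy W \<omega> \<alpha> P g"
  unfolding energy_def using assms by (auto intro!: sum_nonneg divide_nonneg_nonneg)

lemma level_bound:
  fixes f g :: "int^'d \<Rightarrow> real" and W :: "(int^'d) set \<Rightarrow> 'w \<Rightarrow> real"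
  assumes Wpos: "\<forall>x\<in>box (2^m) 0. \<forall>z\<in>box (2^m) (0::int^'d). x \<noteq> z \<longrightarrow> 0 \<le> W {x,z} \<omega>"
    and c: "c > 0" and \<delta>: "\<delta> > 0" and \<alpha>: "0 \<le> \<alpha>" and k: "k < m"
    and good: "\<forall>y\<in>centres m (Suc k). good_blk W \<omega> c \<delta> (box (2^(Suc k)) (y::int^'d))"
  shows "(\<Sum>x\<in>box (2^m) 0. f x * (avg (blk m k x) g - avg (blk m (Suc k) x) g))
     \<le> sqrt (8 * (4 * sqrt (real CARD('d))) powr (real CARD('d) + \<alpha>) / (c*\<delta>*2^CARD('d)))
        * sqrt (energy W \<omega> \<alpha> (box (2^m) 0) g)
        * (2 powr (real k * (real CARD('d) + \<alpha>) / 2) * sqrt (\<Sum>y\<in>centres m k. (avg (box (2^k) y) f)\<^sup>2))"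
proof -
  let ?U = "box (2^m) (0::int^'d)"
  define a where "a x = avg (blk m (Suc k) x) g" for x :: "int^'d"
  define Dz where "Dz z = avg (box (2^k) z) g - a z" for z :: "int^'d"
  define Bk :: real where "Bk = 2^((k+1)*CARD('d))"
  define E where "E = energy W \<omega> \<alpha> ?U g"
  define Fk where "Fk = (\<Sum>y\<in>centres m k. (avg (box (2^k) y) f)\<^sup>2)"
  define G where "G = (\<Sum>z\<in>centres m k. (Dz z)\<^sup>2)"
  define T where "T = (\<Sum>x\<in>?U. f x * (avg (blk m k x) g - a x))"
  define s where "s = real CARD('d) + \<alpha>"
  define D :: real where "D = 4 * sqrt (real CARD('d)) * 2^k"
  have km: "k \<le> m" "Suc k \<le> m" using k by auto
  have Bk: "Bk > 0" by (simp add: Bk_def)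
  have cardk: "real (card (box (2^k) (z::int^'d))) = Bk" for z
    by (simp add: card_box_pow Bk_def)
  have cardk1: "real (card (box (2^(Suc k)) (z::int^'d))) = Bk * 2^CARD('d)" for z
  proof -
    have e1: "card (box (2^(Suc k)) z) = 2^((Suc k+1)*CARD('d))" by (rule card_box_pow)
    have e2: "(2::nat)^((Suc k+1)*CARD('d)) = 2^((k+1)*CARD('d)) * 2^CARD('d)"
      by (simp add: power_add[symmetric] algebra_simps)
    show ?thesis unfolding e1 e2 Bk_def by simp
  qed
  have boxne: "box (2^j) (z::int^'d) \<noteq> {}" for j z using box_nonempty[of "2^j" z] by auto
  have aeq: "\<forall>x\<in>box (2^k) z. a x = a z" if z: "z \<in> centres m k" for z :: "int^'d"
    using blk_parent[OF k z] by (simp add: a_def)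
  have "T = (\<Sum>z\<in>centres m k. \<Sum>x\<in>box (2^k) z. f x * (avg (box (2^k) z) g - a x))"
    unfolding T_def by (rule sum_centres[OF km(1), where F="\<lambda>B x. f x * (avg B g - a x)", symmetric])
  also have "\<dots> = (\<Sum>z\<in>centres m k. (\<Sum>x\<in>box (2^k) z. f x) * Dz z)"
  proof (rule sum.cong[OF refl])
    fix z :: "int^'d" assume z: "z \<in> centres m k"
    show "(\<Sum>x\<in>box (2^k) z. f x * (avg (box (2^k) z) g - a x)) = (\<Sum>x\<in>box (2^k) z. f x) * Dz z"
      using aeq[OF z] by (simp add: Dz_def sum_distrib_right)
  qed
  finally have T1: "T = (\<Sum>z\<in>centres m k. (\<Sum>x\<in>box (2^k) z. f x) * Dz z)" .
  have sf: "(\<Sum>z\<in>centres m k. (\<Sum>x\<in>box (2^k) z. f x)\<^sup>2) = Bk\<^sup>2 * Fk"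
  proof -
    have "(\<Sum>x\<in>box (2^k) z. f x)\<^sup>2 = Bk\<^sup>2 * (avg (box (2^k) z) f)\<^sup>2" for z :: "int^'d"
      using sum_eq_card_avg[of "box (2^k) z" f] cardk[of z] by (simp add: power_mult_distrib)
    then show ?thesis by (simp add: Fk_def sum_distrib_left)
  qed
  have "T\<^sup>2 \<le> (\<Sum>z\<in>centres m k. (\<Sum>x\<in>box (2^k) z. f x)\<^sup>2) * G"
    unfolding T1 G_def by (rule Cauchy_Schwarz_ineq_sum)
  then have "T\<^sup>2 \<le> Bk\<^sup>2 * Fk * G" using sf by simp
  then have "sqrt (T\<^sup>2) \<le> sqrt (Bk\<^sup>2 * Fk * G)" by (rule real_sqrt_le_mono)
  then have T2: "T \<le> sqrt (Bk\<^sup>2 * Fk) * sqrt G" by (simp add: real_sqrt_mult)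
  have "Bk * G = (\<Sum>z\<in>centres m k. real (card (box (2^k) z)) * (avg (box (2^k) z) g - a z)\<^sup>2)"
    by (simp add: G_def Dz_def cardk sum_distrib_left)
  also have "\<dots> \<le> (\<Sum>z\<in>centres m k. \<Sum>x\<in>box (2^k) z. (g x - a z)\<^sup>2)"
    by (intro sum_mono sq_avg_le finite_box boxne)
  also have "\<dots> = (\<Sum>z\<in>centres m k. \<Sum>x\<in>box (2^k) z. (g x - a x)\<^sup>2)"
    using aeq by (intro sum.cong refl) auto
  also have "\<dots> = (\<Sum>x\<in>?U. (g x - a x)\<^sup>2)"
    by (rule sum_centres[OF km(1), where F="\<lambda>B x. (g x - a x)\<^sup>2"])
  also have "\<dots> = (\<Sum>y\<in>centres m (Suc k). \<Sum>x\<in>box (2^(Suc k)) y. (g x - avg (box (2^(Suc k)) y) g)\<^sup>2)"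
    unfolding a_def by (rule sum_centres[OF km(2), where F="\<lambda>B x. (g x - avg B g)\<^sup>2", symmetric])
  also have "\<dots> \<le> (\<Sum>y\<in>centres m (Suc k). 8 * D powr s / (c*\<delta>*(Bk * 2^CARD('d))) * energy W \<omega> \<alpha> (box (2^(Suc k)) y) g)"
  proof (rule sum_mono)
    fix y :: "int^'d" assume y: "y \<in> centres m (Suc k)"
    define P where "P = box (2^(Suc k)) (y::int^'d)"
    define N where "N = Bk * 2^CARD('d)"
    have N: "N > 0" using Bk by (simp add: N_def)
    have PU: "P \<subseteq> ?U" unfolding P_def by (rule centre_box_sub'[OF km(2) y])
    have wP: "\<forall>x\<in>P. \<forall>z\<in>P. x \<noteq> z \<longrightarrow> 0 \<le> W {x,z} \<omega>" using PU Wpos by blast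
    have DD: "sqrt (real CARD('d) * (2 * real_of_int ((2::int)^(Suc k)))\<^sup>2) = D"
    proof -
      have "(2 * real_of_int ((2::int)^(Suc k))) = 4 * 2^k" by simp
      then have "sqrt (real CARD('d) * (2 * real_of_int ((2::int)^(Suc k)))\<^sup>2) = sqrt (real CARD('d)) * (4 * 2^k)"
        by (simp only: real_sqrt_mult real_sqrt_abs) simp
      then show ?thesis by (simp add: D_def)
    qed
    have lP: "\<forall>x\<in>P. \<forall>z\<in>P. x \<noteq> z \<longrightarrow> 0 \<le> W {x,z} \<omega> \<and> lnorm (x - z) \<le> D"
      using wP lnorm_le[of _ "2^(Suc k)" y] DD unfolding P_def by auto
    have "N * (\<Sum>x\<in>P. (g x - avg P g)\<^sup>2) \<le> (\<Sum>x\<in>P. \<Sum>u\<in>P. (g x - g u)\<^sup>2)"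
    proof -
      have Pne: "P \<noteq> {}" unfolding P_def by (rule boxne)
      have Pf: "finite P" unfolding P_def by simp
      have cP: "real (card P) = N" unfolding P_def N_def by (rule cardk1)
      show ?thesis using var_le[OF Pf Pne, of g] unfolding cP .
    qed
    also have "\<dots> \<le> 4/(c*\<delta>) * (\<Sum>x\<in>P. \<Sum>z\<in>P-{x}. W {x,z} \<omega> * (g x - g z)\<^sup>2)"
      by (rule poincare[where w="\<lambda>e. W e \<omega>", OF _ c \<delta>])
         (use good y wP in \<open>auto simp: P_def good_blk_def\<close>)
    also have "\<dots> \<le> 4/(c*\<delta>) * (2 * D powr s * energy W \<omega> \<alpha> P g)"
      using h_le_energy[where W=W and \<omega>=\<omega> and P=P and D=D and g=g, OF _ \<alpha> lP] c \<delta> unfolding s_def P_def by (intro mult_left_mono) auto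
    finally have "N * (\<Sum>x\<in>P. (g x - avg P g)\<^sup>2) \<le> 8 * D powr s * energy W \<omega> \<alpha> P g / (c*\<delta>)"
      by (simp add: field_simps)
    then show "(\<Sum>x\<in>box (2^(Suc k)) y. (g x - avg (box (2^(Suc k)) y) g)\<^sup>2)
        \<le> 8 * D powr s / (c*\<delta>*(Bk * 2^CARD('d))) * energy W \<omega> \<alpha> (box (2^(Suc k)) y) g"
      using div_helper[OF N c \<delta>] unfolding P_def N_def by blast
  qed
  also have "\<dots> = 8 * D powr s / (c*\<delta>*(Bk * 2^CARD('d))) * (\<Sum>y\<in>centres m (Suc k). energy W \<omega> \<alpha> (box (2^(Suc k)) y) g)"
    by (simp add: sum_distrib_left)
  also have "\<dots> \<le> 8 * D powr s / (c*\<delta>*(Bk * 2^CARD('d))) * E"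
    unfolding E_def using energy_blocks[where W=W and \<omega>=\<omega> and \<alpha>=\<alpha> and g=g, OF km(2) Wpos] c \<delta> Bk by (intro mult_left_mono) auto
  finally have BG: "Bk * G \<le> 8 * D powr s / (c*\<delta>*(Bk * 2^CARD('d))) * E" .
  have G3: "G \<le> 8 * D powr s * E / (c * \<delta> * (Bk * 2^CARD('d)) * Bk)"
  proof -
    define Z where "Z = 8 * D powr s / (c*\<delta>*(Bk * 2^CARD('d))) * E"
    have "G * Bk \<le> Z" using BG unfolding Z_def by (simp only: mult.commute)
    then have "G \<le> Z / Bk" by (simp only: pos_le_divide_eq[OF Bk])
    then have "G \<le> (8 * D powr s / (c*\<delta>*(Bk * 2^CARD('d))) * E) / Bk" unfolding Z_def .
    also have "\<dots> = 8 * D powr s * E / (c * \<delta> * (Bk * 2^CARD('d)) * Bk)" by simp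
    finally show ?thesis .
  qed
  have Epos: "E \<ge> 0" unfolding E_def by (rule energy_nonneg) (use Wpos in blast)
  have "T \<le> sqrt (8 * (4 * sqrt (real CARD('d))) powr s / (c * \<delta> * 2^CARD('d))) * sqrt E * (2 powr (real k * s / 2) * sqrt Fk)"
    by (rule final_alg[OF T2 G3 D_def Bk c \<delta>]) (auto simp: Fk_def G_def Epos intro!: sum_nonneg)
  then show ?thesis unfolding T_def a_def s_def E_def Fk_def .
qed

lemma telescope_down:
  fixes a :: "nat \<Rightarrow> real"
  assumes "n \<le> m"
  shows "(\<Sum>k\<in>{n..<m}. a k - a (Suc k)) = a n - a m"
proof -
  have "(\<Sum>k\<in>{n..<m}. a (Suc k) - a k) = a m - a n" by (rule sum_Suc_diff'[OF assms])
  moreover have "(\<Sum>k\<in>{n..<m}. a k - a (Suc k)) = - (\<Sum>k\<in>{n..<m}. a (Suc k) - a k)"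
    by (simp add: sum_negf[symmetric])
  ultimately show ?thesis by simp
qed

lemma det_main:
  fixes f g :: "int^'d \<Rightarrow> real" and W :: "(int^'d) set \<Rightarrow> 'w \<Rightarrow> real"
  assumes Wpos: "\<forall>x\<in>box (2^m) 0. \<forall>z\<in>box (2^m) (0::int^'d). x \<noteq> z \<longrightarrow> 0 \<le> W {x,z} \<omega>"
    and c: "c > 0" and \<delta>: "\<delta> > 0" and \<alpha>: "0 \<le> \<alpha>" and nm: "n \<le> m"
    and good: "\<forall>j. n < j \<and> j \<le> m \<longrightarrow> (\<forall>y\<in>centres m j. good_blk W \<omega> c \<delta> (box (2^j) (y::int^'d)))"
  shows "(\<Sum>x\<in>box (2^m) 0. f x * (g x - avg (box (2^m) 0) g))
     \<le> (\<Sum>z\<in>centres m n. \<Sum>x\<in>box (2^n) z. f x * (g x - avg (box (2^n) z) g))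
       + sqrt (8 * (4 * sqrt (real CARD('d))) powr (real CARD('d) + \<alpha>) / (c*\<delta>*2^CARD('d)))
         * sqrt (energy W \<omega> \<alpha> (box (2^m) 0) g)
         * (\<Sum>k\<in>{n..<m}. 2 powr (real k * (real CARD('d) + \<alpha>) / 2)
             * sqrt (\<Sum>y\<in>centres m k. (avg (box (2^k) y) f)\<^sup>2))"
proof -
  let ?U = "box (2^m) (0::int^'d)"
  let ?C = "sqrt (8 * (4 * sqrt (real CARD('d))) powr (real CARD('d) + \<alpha>) / (c*\<delta>*2^CARD('d)))
         * sqrt (energy W \<omega> \<alpha> (box (2^m) 0) g)"
  define a where "a k x = avg (blk m k x) g" for k x
  have S1: "(\<Sum>z\<in>centres m n. \<Sum>x\<in>box (2^n) z. f x * (g x - avg (box (2^n) z) g))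
      = (\<Sum>x\<in>?U. f x * (g x - a n x))"
    unfolding a_def by (rule sum_centres[OF nm, where F="\<lambda>B x. f x * (g x - avg B g)"])
  have L: "(\<Sum>x\<in>?U. f x * (g x - avg ?U g)) = (\<Sum>x\<in>?U. f x * (g x - a m x))"
    by (simp add: a_def blk_def)
  have "(\<Sum>x\<in>?U. f x * (g x - a m x)) - (\<Sum>x\<in>?U. f x * (g x - a n x))
      = (\<Sum>x\<in>?U. f x * (a n x - a m x))"
    by (simp add: sum_subtractf[symmetric] algebra_simps)
  also have "\<dots> = (\<Sum>x\<in>?U. \<Sum>k\<in>{n..<m}. f x * (a k x - a (Suc k) x))"
  proof (rule sum.cong[OF refl])
    fix x :: "int^'d"
    have "(\<Sum>k\<in>{n..<m}. a k x - a (Suc k) x) = a n x - a m x" by (rule telescope_down[OF nm])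
    then show "f x * (a n x - a m x) = (\<Sum>k\<in>{n..<m}. f x * (a k x - a (Suc k) x))"
      by (simp add: sum_distrib_left[symmetric])
  qed
  also have "\<dots> = (\<Sum>k\<in>{n..<m}. \<Sum>x\<in>?U. f x * (a k x - a (Suc k) x))"
    by (rule sum.swap)
  also have "\<dots> \<le> (\<Sum>k\<in>{n..<m}. ?C * (2 powr (real k * (real CARD('d) + \<alpha>) / 2)
             * sqrt (\<Sum>y\<in>centres m k. (avg (box (2^k) y) f)\<^sup>2)))"
  proof (rule sum_mono)
    fix k assume k: "k \<in> {n..<m}"
    have km: "k < m" using k by simp
    have gk: "\<forall>y\<in>centres m (Suc k). good_blk W \<omega> c \<delta> (box (2^(Suc k)) (y::int^'d))"
      using good[rule_format, of "Suc k"] k by simp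
    show "(\<Sum>x\<in>?U. f x * (a k x - a (Suc k) x)) \<le> ?C * (2 powr (real k * (real CARD('d) + \<alpha>) / 2)
             * sqrt (\<Sum>y\<in>centres m k. (avg (box (2^k) y) f)\<^sup>2))"
      unfolding a_def using level_bound[OF Wpos c \<delta> \<alpha> km gk, of f g] by simp
  qed
  also have "\<dots> = ?C * (\<Sum>k\<in>{n..<m}. 2 powr (real k * (real CARD('d) + \<alpha>) / 2)
             * sqrt (\<Sum>y\<in>centres m k. (avg (box (2^k) y) f)\<^sup>2))"
    by (rule sum_distrib_left[symmetric])
  finally show ?thesis using S1 L by linarith
qed

lemma edge_mem: "x \<noteq> y \<Longrightarrow> {x, y} \<in> edges"
  by (auto simp: edges_def)

context prob_space
begin

lemma indep_pairs:
  fixes W :: "(int^'d) set \<Rightarrow> 'a \<Rightarrow> real"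
  assumes ind: "indep_vars (\<lambda>_. borel) W edges" and xu: "x \<noteq> u" and S: "S \<inter> {x,u} = {}"
  shows "indep_vars (\<lambda>_. borel) (\<lambda>z \<omega>. if c \<le> W {x,z} \<omega> \<and> c \<le> W {z,u} \<omega> then 1 else (0::real)) S"
proof -
  define K where "K z = {{x,z},{z,u}}" for z
  have K: "K z \<subseteq> edges" if "z \<in> S" for z
  proof -
    have "x \<noteq> z" "z \<noteq> u" using that S by auto
    then show ?thesis by (auto simp: K_def intro: edge_mem)
  qed
  have disj: "disjoint_family_on K S"
    unfolding disjoint_family_on_def K_def using S xu by (auto simp: doubleton_eq_iff)
  have r: "indep_vars (\<lambda>z. PiM (K z) (\<lambda>_. borel)) (\<lambda>z \<omega>. restrict (\<lambda>e. W e \<omega>) (K z)) S"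
    by (rule indep_vars_restrict[OF ind K disj])
  have meas: "(\<lambda>h. if c \<le> h {x,z} \<and> c \<le> h {z,u} then 1 else (0::real)) \<in> borel_measurable (PiM (K z) (\<lambda>_. borel))"
    if "z \<in> S" for z
  proof -
    have [measurable]: "(\<lambda>h. h {x,z}) \<in> borel_measurable (PiM (K z) (\<lambda>_. (borel :: real measure)))"
      by (rule measurable_component_singleton) (simp add: K_def)
    have [measurable]: "(\<lambda>h. h {z,u}) \<in> borel_measurable (PiM (K z) (\<lambda>_. (borel :: real measure)))"
      by (rule measurable_component_singleton) (simp add: K_def)
    show ?thesis by measurable
  qed
  have "indep_vars (\<lambda>_. borel) (\<lambda>z \<omega>. (\<lambda>h. if c \<le> h {x,z} \<and> c \<le> h {z,u} then 1 else (0::real))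
           (restrict (\<lambda>e. W e \<omega>) (K z))) S"
    by (rule indep_vars_compose2[OF r meas])
  moreover have "(\<lambda>\<omega>. (\<lambda>h. if c \<le> h {x,z} \<and> c \<le> h {z,u} then 1 else (0::real)) (restrict (\<lambda>e. W e \<omega>) (K z)))
      = (\<lambda>\<omega>. if c \<le> W {x,z} \<omega> \<and> c \<le> W {z,u} \<omega> then 1 else 0)" for z
    by (simp add: K_def)
  ultimately show ?thesis by simp
qed

lemma prob_both:
  fixes W :: "(int^'d) set \<Rightarrow> 'a \<Rightarrow> real"
  assumes ind: "indep_vars (\<lambda>_. borel) W edges" and e: "e1 \<in> edges" "e2 \<in> edges" "e1 \<noteq> e2"
  shows "prob {\<omega>\<in>space M. c \<le> W e1 \<omega> \<and> c \<le> W e2 \<omega>}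
       = prob {\<omega>\<in>space M. c \<le> W e1 \<omega>} * prob {\<omega>\<in>space M. c \<le> W e2 \<omega>}"
proof -
  have isd: "indep_sets (\<lambda>i. {W i -` A \<inter> space M | A. A \<in> sets borel}) edges"
    using ind unfolding indep_vars_def2 by simp
  define A where "A e = W e -` {c..} \<inter> space M" for e
  have J: "{e1,e2} \<subseteq> edges" using e by auto
  have AP: "A \<in> Pi {e1,e2} (\<lambda>i. {W i -` A \<inter> space M | A. A \<in> sets (borel::real measure)})"
    unfolding A_def by (auto intro!: exI[of _ "{c..}"])
  have "prob (\<Inter>j\<in>{e1,e2}. A j) = (\<Prod>j\<in>{e1,e2}. prob (A j))"
    using isd J AP unfolding indep_sets_def by blast
  moreover have "(\<Inter>j\<in>{e1,e2}. A j) = {\<omega>\<in>space M. c \<le> W e1 \<omega> \<and> c \<le> W e2 \<omega>}"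
    by (auto simp: A_def)
  moreover have "A e = {\<omega>\<in>space M. c \<le> W e \<omega>}" for e by (auto simp: A_def)
  ultimately show ?thesis using e(3) by simp
qed

end

context prob_space
begin

lemma bad_triple:
  fixes W :: "(int^'d) set \<Rightarrow> 'a \<Rightarrow> real"
  assumes ind: "indep_vars (\<lambda>_. borel) W edges"
    and pe: "\<forall>e\<in>edges. prob {\<omega>\<in>space M. c \<le> W e \<omega>} = p"
    and fin: "finite P" and x: "x \<in> P" and u: "u \<in> P" and xu: "x \<noteq> u" and N4: "4 \<le> card P"
  shows "prob {\<omega>\<in>space M. (\<Sum>z\<in>P-{x,u}. if c \<le> W {x,z} \<omega> \<and> c \<le> W {z,u} \<omega> then 1 else 0)
            < (p^2/4) * real (card P)} \<le> exp (-(p^4/4) * real (card P))"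
proof -
  define S where "S = P - {x,u}"
  define Y where "Y z \<omega> = (if c \<le> W {x,z} \<omega> \<and> c \<le> W {z,u} \<omega> then 1 else (0::real))" for z \<omega>
  define n where "n = card S"
  define N where "N = card P"
  have nN: "n = N - 2" unfolding n_def N_def S_def using x u xu fin
    by (subst card_Diff_subset) auto
  have nN2: "real N \<le> 2 * real n" "0 < real n" using nN N4 by (auto simp: N_def)
  have Sfin: "finite S" using fin by (simp add: S_def)
  have Yind: "indep_vars (\<lambda>_. borel) Y S"
    unfolding Y_def by (rule indep_pairs[OF ind xu]) (auto simp: S_def)
  have EY: "expectation (Y z) = p^2" if z: "z \<in> S" for z
  proof -
    have zx: "z \<noteq> x" "z \<noteq> u" using z by (auto simp: S_def)
    have e1: "{x,z} \<in> edges" "{z,u} \<in> edges" using zx by (auto intro: edge_mem)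
    have ne: "{x,z} \<noteq> {z,u}" using zx xu by (auto simp: doubleton_eq_iff)
    have "expectation (Y z) = expectation (indicator {\<omega>\<in>space M. c \<le> W {x,z} \<omega> \<and> c \<le> W {z,u} \<omega>})"
      by (rule Bochner_Integration.integral_cong) (auto simp: Y_def indicator_def)
    also have "\<dots> = prob {\<omega>\<in>space M. c \<le> W {x,z} \<omega> \<and> c \<le> W {z,u} \<omega>}"
      by (simp add: integral_indicator Int_absorb2 subset_iff)
    also have "\<dots> = prob {\<omega>\<in>space M. c \<le> W {x,z} \<omega>} * prob {\<omega>\<in>space M. c \<le> W {z,u} \<omega>}"
      by (rule prob_both[OF ind e1 ne])
    also have "\<dots> = p^2" using pe e1 by (simp add: power2_eq_square)
    finally show ?thesis .
  qed
  interpret H: Hoeffding_ineq M S Y "\<lambda>_. 0" "\<lambda>_. 1" "real n * p^2"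
  proof unfold_locales
    show "finite S" by (rule Sfin)
    show "indep_vars (\<lambda>_. borel) Y S" by (rule Yind)
    show "AE x in M. Y i x \<in> {0..1}" if "i \<in> S" for i by (simp add: Y_def)
    show "real n * p^2 \<equiv> (\<Sum>i\<in>S. expectation (Y i))" using EY by (simp add: n_def)
  qed
  define t where "t = real n * p^2 / 2"
  have t: "t \<ge> 0" by (simp add: t_def)
  have Hb: "prob {\<omega>\<in>space M. (\<Sum>i\<in>S. Y i \<omega>) \<le> real n * p^2 - t}
        \<le> exp (-2 * t\<^sup>2 / (\<Sum>i\<in>S. (1 - 0)\<^sup>2))"
    by (rule H.Hoeffding_ineq_le[OF t]) (use nN2 in \<open>simp add: n_def\<close>)
  have rv[measurable]: "i \<in> S \<Longrightarrow> Y i \<in> borel_measurable M" for i by (rule H.random_variable)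
  have sub: "{\<omega>\<in>space M. (\<Sum>z\<in>S. Y z \<omega>) < (p^2/4) * real N}
        \<subseteq> {\<omega>\<in>space M. (\<Sum>i\<in>S. Y i \<omega>) \<le> real n * p^2 - t}"
  proof -
    have "(p^2/4) * real N \<le> real n * p^2 - t"
    proof -
      have "p^2 * real N \<le> p^2 * (2 * real n)" using nN2 by (intro mult_left_mono) auto
      then show ?thesis by (simp add: t_def field_simps)
    qed
    then show ?thesis by auto
  qed
  have meas: "{\<omega>\<in>space M. (\<Sum>i\<in>S. Y i \<omega>) \<le> real n * p^2 - t} \<in> events"
    by measurable
  have "prob {\<omega>\<in>space M. (\<Sum>z\<in>S. Y z \<omega>) < (p^2/4) * real N}
        \<le> prob {\<omega>\<in>space M. (\<Sum>i\<in>S. Y i \<omega>) \<le> real n * p^2 - t}"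
    by (rule finite_measure_mono[OF sub meas])
  also have "\<dots> \<le> exp (-2 * t\<^sup>2 / (\<Sum>i\<in>S. (1 - 0)\<^sup>2))" by (rule Hb)
  also have "-2 * t\<^sup>2 / (\<Sum>i\<in>S. (1 - 0)\<^sup>2) = -(p^4/2) * real n"
  proof -
    have p4: "p^4 = p*(p*(p*p))" by (simp add: power_def numeral_eq_Suc)
    show ?thesis using nN2 unfolding p4 by (simp add: t_def n_def power2_eq_square field_simps)
  qed
  also have "exp (-(p^4/2) * real n) \<le> exp (-(p^4/4) * real N)"
  proof -
    have "p^4 * real N \<le> p^4 * (2 * real n)" using nN2 by (intro mult_left_mono) auto
    then have "-(p^4/2) * real n \<le> -(p^4/4) * real N" by (simp add: algebra_simps)
    then show ?thesis by simp
  qed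
  finally show ?thesis by (simp add: S_def Y_def N_def)
qed

end

definition badT :: "'a measure \<Rightarrow> ((int^'d) set \<Rightarrow> 'a \<Rightarrow> real) \<Rightarrow> real \<Rightarrow> real \<Rightarrow> (int^'d) set \<Rightarrow> int^'d \<Rightarrow> int^'d \<Rightarrow> 'a set" where
  "badT M W c \<delta> P x u = {\<omega>\<in>space M. (\<Sum>z\<in>P-{x,u}. if c \<le> W {x,z} \<omega> \<and> c \<le> W {z,u} \<omega> then 1 else 0) < \<delta> * real (card P)}"

definition levs :: "real \<Rightarrow> nat \<Rightarrow> nat set" where
  "levs \<theta> m = {j. 1 \<le> j \<and> j \<le> m \<and> \<theta> * log 2 (real m * ln 2) + 1 \<le> real j}"

definition bad :: "'a measure \<Rightarrow> ((int^'d) set \<Rightarrow> 'a \<Rightarrow> real) \<Rightarrow> real \<Rightarrow> real \<Rightarrow> real \<Rightarrow> nat \<Rightarrow> 'a set" where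
  "bad M W c \<delta> \<theta> m = (\<Union>j\<in>levs \<theta> m. \<Union>y\<in>(centres m j :: (int^'d) set). \<Union>x\<in>box (2^j) y. \<Union>u\<in>box (2^j) y - {x}.
       badT M W c \<delta> (box (2^j) y) x u)"

lemma finite_levs: "finite (levs \<theta> m)"
  by (rule finite_subset[of _ "{..m}"]) (auto simp: levs_def)

lemma card_levs: "card (levs \<theta> m) \<le> m + 1"
proof -
  have "card (levs \<theta> m) \<le> card {..m}" by (rule card_mono) (auto simp: levs_def)
  then show ?thesis by simp
qed

lemma sum_if_card: "finite S \<Longrightarrow> (\<Sum>z\<in>S. if Q z then 1 else 0) = real (card {z\<in>S. Q z})"
  by (simp add: sum.inter_filter[symmetric])

lemma good_of_not_bad:
  assumes \<omega>: "\<omega> \<in> space M" and nb: "\<omega> \<notin> bad M W c \<delta> \<theta> m" and j: "j \<in> levs \<theta> m"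
    and y: "y \<in> centres m j"
  shows "good_blk W \<omega> c \<delta> (box (2^j) (y::int^'d))"
  unfolding good_blk_def
proof (intro ballI impI)
  fix x u assume x: "x \<in> box (2^j) y" and u: "u \<in> box (2^j) y" and xu: "x \<noteq> u"
  have "\<omega> \<notin> badT M W c \<delta> (box (2^j) y) x u" using nb j y x u xu by (auto simp: bad_def)
  then show "\<delta> * real (card (box (2^j) y)) \<le> real (card {z \<in> box (2^j) y - {x, u}. c \<le> W {x, z} \<omega> \<and> c \<le> W {z, u} \<omega>})"
    using \<omega> by (auto simp: badT_def sum_if_card)
qed

lemma badT_meas:
  assumes meas: "\<forall>e\<in>edges. W e \<in> borel_measurable M" and xu: "x \<noteq> u"
  shows "badT M W c \<delta> P x u \<in> sets M"
proof -
  have t: "(\<lambda>\<omega>. if c \<le> W {x,z} \<omega> \<and> c \<le> W {z,u} \<omega> then 1 else (0::real)) \<in> borel_measurable M"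
    if z: "z \<in> P - {x,u}" for z
  proof -
    have [measurable]: "W {x,z} \<in> borel_measurable M" "W {z,u} \<in> borel_measurable M"
      using meas z by (auto intro: edge_mem)
    show ?thesis by measurable
  qed
  have [measurable]: "(\<lambda>\<omega>. \<Sum>z\<in>P-{x,u}. if c \<le> W {x,z} \<omega> \<and> c \<le> W {z,u} \<omega> then 1 else (0::real)) \<in> borel_measurable M"
    by (rule borel_measurable_sum) (rule t)
  show ?thesis unfolding badT_def by measurable
qed

lemma bad_meas:
  assumes meas: "\<forall>e\<in>edges. W e \<in> borel_measurable M"
  shows "bad M W c \<delta> \<theta> m \<in> sets M"
  unfolding bad_def
  by (intro sets.finite_UN finite_levs finite_centres finite_box finite_Diff badT_meas[OF meas]) auto

lemma N2exp:
  fixes a N :: real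
  assumes a: "a > 0" and N: "N \<ge> 0"
  shows "N\<^sup>2 * exp (-a*N) \<le> (16/a\<^sup>2) * exp (-(a/2)*N)"
proof -
  have e1: "a*N/4 \<le> exp (a*N/4)" using exp_ge_add_one_self[of "a*N/4"] by linarith
  have "(a*N/4)\<^sup>2 \<le> (exp (a*N/4))\<^sup>2" using e1 a N by (intro power_mono) auto
  also have "(exp (a*N/4))\<^sup>2 = exp (a*N/2)" by (simp add: power2_eq_square exp_add[symmetric])
  finally have "(a*N/4)\<^sup>2 \<le> exp (a*N/2)" .
  then have "N\<^sup>2 \<le> (16/a\<^sup>2) * exp (a*N/2)" using a by (simp add: power_divide field_simps power2_eq_square)
  then have "N\<^sup>2 * exp (-a*N) \<le> (16/a\<^sup>2) * exp (a*N/2) * exp (-a*N)" by (intro mult_right_mono) auto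
  also have "\<dots> = (16/a\<^sup>2) * exp (-(a/2)*N)" by (simp add: mult.assoc exp_add[symmetric])
  finally show ?thesis .
qed

lemma Y_le_N:
  assumes m: "m \<ge> 1" and \<theta>: "\<theta> \<ge> 0" and j: "j \<in> levs \<theta> m"
  shows "(real m * ln 2) powr (real d * \<theta>) \<le> real (2^((j+1)*d))"
proof -
  define X where "X = real m * ln 2"
  have X: "X > 0" using m by (simp add: X_def)
  define L where "L = log 2 X"
  have jL: "\<theta> * L \<le> real j" using j by (simp add: levs_def L_def X_def)
  have "X powr (real d * \<theta>) = (2 powr L) powr (real d * \<theta>)" using X by (simp add: L_def)
  also have "\<dots> = 2 powr (real d * (\<theta> * L))" by (simp add: powr_powr algebra_simps)
  also have "\<dots> \<le> 2 powr (real ((j+1)*d))"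
  proof (rule powr_mono)
    have "real d * (\<theta> * L) \<le> real d * real j" using jL by (intro mult_left_mono) auto
    also have "\<dots> \<le> real ((j+1)*d)" by (simp add: algebra_simps)
    finally show "real d * (\<theta> * L) \<le> real ((j+1)*d)" .
  qed simp
  also have "\<dots> = real (2^((j+1)*d))"
  proof -
    have "(2::real) powr (real ((j+1)*d)) = 2^((j+1)*d)" by (rule powr_realpow) simp
    then show ?thesis by simp
  qed
  finally show ?thesis by (simp add: X_def)
qed

context prob_space
begin

lemma prob_bad_bound:
  fixes W :: "(int^'d) set \<Rightarrow> 'a \<Rightarrow> real"
  assumes meas: "\<forall>e\<in>edges. W e \<in> borel_measurable M"
    and ind: "indep_vars (\<lambda>_. borel) W edges"
    and pe: "\<forall>e\<in>edges. prob {\<omega>\<in>space M. c \<le> W e \<omega>} = p"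
    and p: "p > 0" and \<theta>: "\<theta> \<ge> 0" and m: "m \<ge> 1"
  shows "prob (bad M W c (p\<^sup>2/4) \<theta> m) \<le> real (m+1) * (2^((m+1)*CARD('d)) * ((16/(p^4/4)\<^sup>2)
            * exp (-((p^4/4)/2) * (real m * ln 2) powr (real CARD('d) * \<theta>))))"
proof -
  define a where "a = p^4/4"
  have a: "a > 0" using p by (simp add: a_def)
  define Y where "Y = (real m * ln 2) powr (real CARD('d) * \<theta>)"
  define Z where "Z = (2::real)^((m+1)*CARD('d)) * ((16/a\<^sup>2) * exp (-(a/2) * Y))"
  let ?T = "\<lambda>j (y::int^'d) x u. badT M W c (p\<^sup>2/4) (box (2^j) y) x u"
  have Tm: "x \<noteq> u \<Longrightarrow> ?T j y x u \<in> events" for j y x u by (rule badT_meas[OF meas])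
  have Um: "(\<Union>u\<in>box (2^j) y - {x}. ?T j y x u) \<in> events" for j y x
    by (intro sets.finite_UN Tm) auto
  have Xm: "(\<Union>x\<in>box (2^j) y. \<Union>u\<in>box (2^j) y - {x}. ?T j y x u) \<in> events" for j y
    by (intro sets.finite_UN Um) auto
  have Ym: "(\<Union>y\<in>(centres m j :: (int^'d) set). \<Union>x\<in>box (2^j) y. \<Union>u\<in>box (2^j) y - {x}. ?T j y x u) \<in> events" for j
    by (intro sets.finite_UN Xm) auto
  have lev: "prob (\<Union>y\<in>(centres m j :: (int^'d) set). \<Union>x\<in>box (2^j) y. \<Union>u\<in>box (2^j) y - {x}. ?T j y x u) \<le> Z"
    if j: "j \<in> levs \<theta> m" for j
  proof -
    have j1: "1 \<le> j" using j by (simp add: levs_def)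
    define N where "N = real (2^((j+1)*CARD('d)) :: nat)"
    have cardP: "real (card (box (2^j) (y::int^'d))) = N" for y by (simp add: card_box_pow N_def)
    have N4: "4 \<le> card (box (2^j) (y::int^'d))" for y
    proof -
      have "(4::nat) = 2^2" by simp
      also have "\<dots> \<le> 2^((j+1)*CARD('d))"
      proof (intro power_increasing)
        have d1: "1 \<le> CARD('d)" by (simp add: Suc_le_eq)
        have h: "CARD('d) \<le> j * CARD('d)" using j1 by simp
        have e: "(j+1)*CARD('d) = j*CARD('d) + CARD('d)" by simp
        show "2 \<le> (j+1)*CARD('d)" using d1 h e by linarith
      qed simp
      finally show ?thesis by (simp add: card_box_pow)
    qed
    have T: "prob (?T j y x u) \<le> exp (-a * N)" if x: "x \<in> box (2^j) y" and u: "u \<in> box (2^j) y - {x}" for y x u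
    proof -
      have "prob (?T j y x u) \<le> exp (-(p^4/4) * real (card (box (2^j) y)))"
        unfolding badT_def by (rule bad_triple[OF ind pe finite_box x]) (use u N4 in auto)
      then show ?thesis by (simp add: cardP a_def)
    qed
    have NY: "Y \<le> N" unfolding Y_def N_def by (rule Y_le_N[OF m \<theta> j])
    have "prob (\<Union>y\<in>(centres m j :: (int^'d) set). \<Union>x\<in>box (2^j) y. \<Union>u\<in>box (2^j) y - {x}. ?T j y x u)
        \<le> (\<Sum>y\<in>(centres m j :: (int^'d) set). prob (\<Union>x\<in>box (2^j) y. \<Union>u\<in>box (2^j) y - {x}. ?T j y x u))"
      by (rule measure_UNION_le) (auto intro: Xm)
    also have "\<dots> \<le> (\<Sum>y\<in>(centres m j :: (int^'d) set). (16/a\<^sup>2) * exp (-(a/2) * Y))"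
    proof (rule sum_mono)
      fix y :: "int^'d" assume y: "y \<in> centres m j"
      have "prob (\<Union>x\<in>box (2^j) y. \<Union>u\<in>box (2^j) y - {x}. ?T j y x u)
          \<le> (\<Sum>x\<in>box (2^j) y. prob (\<Union>u\<in>box (2^j) y - {x}. ?T j y x u))"
        by (rule measure_UNION_le) (auto intro: Um)
      also have "\<dots> \<le> (\<Sum>x\<in>box (2^j) y. N * exp (-a * N))"
      proof (rule sum_mono)
        fix x assume x: "x \<in> box (2^j) y"
        have "prob (\<Union>u\<in>box (2^j) y - {x}. ?T j y x u) \<le> (\<Sum>u\<in>box (2^j) y - {x}. prob (?T j y x u))"
          by (rule measure_UNION_le) (auto intro: Tm)
        also have "\<dots> \<le> (\<Sum>u\<in>box (2^j) y - {x}. exp (-a * N))"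
          by (rule sum_mono) (rule T[OF x])
        also have "\<dots> = real (card (box (2^j) y - {x})) * exp (-a * N)" by simp
        also have "\<dots> \<le> N * exp (-a * N)"
        proof -
          have "card (box (2^j) y - {x}) \<le> card (box (2^j) y)" by (rule card_mono) auto
          then have "real (card (box (2^j) y - {x})) \<le> N" using cardP[of y] by linarith
          then show ?thesis by (intro mult_right_mono) auto
        qed
        finally show "prob (\<Union>u\<in>box (2^j) y - {x}. ?T j y x u) \<le> N * exp (-a * N)" .
      qed
      also have "\<dots> = N\<^sup>2 * exp (-a * N)" using cardP[of y] by (simp add: power2_eq_square)
      also have "\<dots> \<le> (16/a\<^sup>2) * exp (-(a/2) * N)" by (rule N2exp[OF a]) (simp add: N_def)
      also have "\<dots> \<le> (16/a\<^sup>2) * exp (-(a/2) * Y)" using NY a by (intro mult_left_mono) auto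
      finally show "prob (\<Union>x\<in>box (2^j) y. \<Union>u\<in>box (2^j) y - {x}. ?T j y x u) \<le> (16/a\<^sup>2) * exp (-(a/2) * Y)" .
    qed
    also have "\<dots> = real (card (centres m j :: (int^'d) set)) * ((16/a\<^sup>2) * exp (-(a/2) * Y))" by simp
    also have "\<dots> \<le> Z"
    proof -
      have "card (centres m j :: (int^'d) set) \<le> card (box (2^m) (0::int^'d))"
        by (rule card_mono[OF finite_box centres_sub])
      then have "real (card (centres m j :: (int^'d) set)) \<le> 2^((m+1)*CARD('d))"
        by (simp add: card_box_pow)
      then show ?thesis unfolding Z_def by (intro mult_right_mono) auto
    qed
    finally show ?thesis .
  qed
  have "prob (bad M W c (p\<^sup>2/4) \<theta> m)
      \<le> (\<Sum>j\<in>levs \<theta> m. prob (\<Union>y\<in>(centres m j :: (int^'d) set). \<Union>x\<in>box (2^j) y. \<Union>u\<in>box (2^j) y - {x}. ?T j y x u))"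
    unfolding bad_def by (rule measure_UNION_le[OF finite_levs]) (rule Ym)
  also have "\<dots> \<le> (\<Sum>j\<in>levs \<theta> m. Z)" by (rule sum_mono) (rule lev)
  also have "\<dots> = real (card (levs \<theta> m)) * Z" by simp
  also have "\<dots> \<le> real (m+1) * Z"
  proof -
    have "0 \<le> Z" by (simp add: Z_def)
    then show ?thesis using card_levs[of \<theta> m] by (intro mult_right_mono) auto
  qed
  finally show ?thesis by (simp add: Z_def Y_def a_def)
qed

end

lemma summable_bound:
  fixes a K \<beta> :: real and d :: nat
  assumes a: "a > 0" and \<beta>: "\<beta> > 1" and K: "K \<ge> 0"
  shows "summable (\<lambda>m. real (m+1) * (2^((m+1)*d) * (K * exp (-(a/2) * (real m * ln 2) powr \<beta>))))"
proof -
  define L where "L = 2 * (real d + 2) / a"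
  have lim1: "filterlim (\<lambda>m::nat. real m * ln 2) at_top sequentially"
    by (rule filterlim_at_top_mult_tendsto_pos[OF tendsto_const _ filterlim_real_sequentially]) simp
  have lim2: "filterlim (\<lambda>x::real. x powr (\<beta> - 1)) at_top at_top"
    by (rule real_powr_at_top) (use \<beta> in simp)
  have lim: "filterlim (\<lambda>m::nat. (real m * ln 2) powr (\<beta> - 1)) at_top sequentially"
    by (rule filterlim_compose[OF lim2 lim1])
  have ev: "eventually (\<lambda>m. L \<le> (real m * ln 2) powr (\<beta> - 1)) sequentially"
    using lim unfolding filterlim_at_top by blast
  have ev1: "eventually (\<lambda>m::nat. 1 \<le> m) sequentially" by (rule eventually_ge_at_top)
  have bnd: "norm (real (m+1) * (2^((m+1)*d) * (K * exp (-(a/2) * (real m * ln 2) powr \<beta>))))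
       \<le> K * 2^d * (1/2)^m" if m1: "1 \<le> m" and mL: "L \<le> (real m * ln 2) powr (\<beta> - 1)" for m
  proof -
    define y where "y = real m * ln 2"
    have y: "y > 0" using m1 by (simp add: y_def)
    have yb: "y powr \<beta> = y * y powr (\<beta> - 1)"
    proof -
      have "y powr \<beta> = y powr (1 + (\<beta> - 1))" by simp
      also have "\<dots> = y powr 1 * y powr (\<beta> - 1)" by (rule powr_add)
      finally show ?thesis using y by simp
    qed
    have "(real d + 2) * y \<le> (a/2) * y powr \<beta>"
    proof -
      have "(a/2) * y powr \<beta> = (a/2) * L * y + (a/2) * (y powr (\<beta> - 1) - L) * y"
        unfolding yb by (simp add: algebra_simps)
      moreover have "(a/2) * L * y = (real d + 2) * y" using a by (simp add: L_def)
      moreover have "0 \<le> (a/2) * (y powr (\<beta> - 1) - L) * y" using a y mL by (simp add: y_def)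
      ultimately show ?thesis by linarith
    qed
    then have e: "exp (-(a/2) * y powr \<beta>) \<le> exp (-((real d + 2) * y))" by simp
    have e2: "exp (-((real d + 2) * y)) = 1 / 2^((d+2)*m)"
    proof -
      have "exp (-((real d + 2) * y)) = 2 powr (- real ((d+2)*m))"
        by (simp add: powr_def y_def algebra_simps)
      also have "\<dots> = 1 / 2 powr (real ((d+2)*m))" by (rule powr_minus_divide)
      also have "(2::real) powr (real ((d+2)*m)) = 2^((d+2)*m)" by (rule powr_realpow) simp
      finally show ?thesis .
    qed
    have m2: "real (m+1) \<le> 2^m"
    proof -
      have "m + 1 \<le> 2^m" using less_exp[of m] by (simp add: Suc_le_eq)
      then show ?thesis by (metis of_nat_le_iff of_nat_numeral of_nat_power)
    qed
    have "norm (real (m+1) * (2^((m+1)*d) * (K * exp (-(a/2) * y powr \<beta>))))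
        = real (m+1) * (2^((m+1)*d) * (K * exp (-(a/2) * y powr \<beta>)))" using K by simp
    also have "\<dots> \<le> 2^m * (2^((m+1)*d) * (K * (1 / 2^((d+2)*m))))"
      using e e2 m2 K by (intro mult_mono) (auto intro!: mult_left_mono)
    also have "\<dots> = K * 2^d * (1/2)^m"
    proof -
      have "(2::real)^((d+2)*m) = 2^m * 2^(m*d) * 2^m" by (simp add: power_add[symmetric] algebra_simps)
      moreover have "(2::real)^((m+1)*d) = 2^(m*d) * 2^d" by (simp add: power_add[symmetric] algebra_simps)
      ultimately show ?thesis by (simp add: power_one_over field_simps)
    qed
    finally show ?thesis by (simp add: y_def)
  qed
  show ?thesis
  proof (rule summable_comparison_test_ev)
    show "eventually (\<lambda>m. norm (real (m+1) * (2^((m+1)*d) * (K * exp (-(a/2) * (real m * ln 2) powr \<beta>)))) \<le> K * 2^d * (1/2)^m) sequentially"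
      using ev ev1 by eventually_elim (rule bnd)
    show "summable (\<lambda>m. K * 2^d * (1/2::real)^m)"
      by (intro summable_mult summable_geometric) simp
  qed
qed

theorem proposition2p3:
  fixes M :: "'w measure"
    and W :: "(int^'d) set \<Rightarrow> 'w \<Rightarrow> real"
    and Mb :: real and \<alpha> :: real
  assumes "prob_space M"
    and "\<forall>e\<in>edges. W e \<in> borel_measurable M"
    and "prob_space.indep_vars M (\<lambda>_. borel) W edges"
    and "\<forall>e\<in>edges. \<forall>e'\<in>edges. distr M borel (W e) = distr M borel (W e')"
    and "\<forall>e\<in>edges. \<forall>\<omega>\<in>space M. 0 \<le> W e \<omega> \<and> W e \<omega> \<le> Mb"
    and "\<forall>e\<in>edges. integral\<^sup>L M (W e) = 1"
    and "Mb > 0"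
    and "0 < \<alpha>" and "\<alpha> < 2"
  shows "\<exists>C2>0. \<forall>\<theta>::real. \<theta> > 1 / real CARD('d) \<longrightarrow>
    (\<exists>m0 :: 'w \<Rightarrow> ereal. m0 \<in> borel_measurable M \<and>
       (\<forall>\<omega>\<in>space M. 1 \<le> m0 \<omega>) \<and>
       (AE \<omega> in M. m0 \<omega> \<noteq> \<infinity>) \<and>
       (AE \<omega> in M. \<forall>(m::nat) (n::nat) (f::int^'d \<Rightarrow> real) (g::int^'d \<Rightarrow> real).
          ereal (real m) > m0 \<omega> \<and> \<theta> * log 2 (real m * ln 2) \<le> real n \<and> n \<le> m \<longrightarrow>
          (\<Sum>x\<in>box (2^m) 0. f x * (g x - avg (box (2^m) 0) g))
          \<le> (\<Sum>z\<in>centres m n. \<Sum>x\<in>box (2^n) z. f x * (g x - avg (box (2^n) z) g))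
             + C2 * sqrt (energy W \<omega> \<alpha> (box (2^m) 0) g)
               * (\<Sum>k\<in>{n..<m}. 2 powr (real k * (real CARD('d) + \<alpha>) / 2)
                   * sqrt (\<Sum>y\<in>centres m k. (avg (box (2^k) y) f)\<^sup>2))))"
proof -
  interpret P: prob_space M by (rule assms(1))
  note meas = assms(2) and ind = assms(3) and distr_eq = assms(4) and bnds = assms(5)
    and int1 = assms(6) and Mb = assms(7)
  define v :: "int^'d" where "v = (\<chi> i. 1)"
  have v: "(0::int^'d) \<noteq> v" by (simp add: v_def vec_eq_iff)
  define e0 where "e0 = {0, v}"
  have e0: "e0 \<in> edges" unfolding e0_def by (rule edge_mem[OF v])
  define c :: real where "c = 1/2"
  have c: "c > 0" by (simp add: c_def)
  define p where "p = P.prob {\<omega>\<in>space M. c \<le> W e0 \<omega>}"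
  have pe: "\<forall>e\<in>edges. P.prob {\<omega>\<in>space M. c \<le> W e \<omega>} = p"
  proof
    fix e :: "(int^'d) set" assume e: "e \<in> edges"
    have h: "P.prob {\<omega>\<in>space M. c \<le> W e \<omega>} = measure (distr M borel (W e)) {c..}" if "e \<in> edges" for e
    proof -
      have "measure (distr M borel (W e)) {c..} = measure M (W e -` {c..} \<inter> space M)"
        by (rule measure_distr) (use meas that in auto)
      also have "W e -` {c..} \<inter> space M = {\<omega>\<in>space M. c \<le> W e \<omega>}" by auto
      finally show ?thesis by simp
    qed
    show "P.prob {\<omega>\<in>space M. c \<le> W e \<omega>} = p"
      unfolding p_def h[OF e] h[OF e0] using distr_eq e e0 by metis
  qed
  have p: "p > 0"
  proof -
    define A where "A = {\<omega>\<in>space M. c \<le> W e0 \<omega>}"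
    have [measurable]: "W e0 \<in> borel_measurable M" using meas e0 by auto
    have A: "A \<in> sets M" unfolding A_def by measurable
    have iW: "integrable M (W e0)"
      by (rule finite_measure.integrable_const_bound[where B=Mb]) (use bnds e0 in \<open>auto intro: P.finite_measure_axioms\<close>)
    have iA: "integrable M (\<lambda>\<omega>. c + Mb * indicator A \<omega>)"
      using A by (intro Bochner_Integration.integrable_add integrable_mult_right integrable_real_indicator) (auto simp: P.emeasure_finite less_top[symmetric])
    have "1 = integral\<^sup>L M (W e0)" using int1 e0 by simp
    also have "\<dots> \<le> integral\<^sup>L M (\<lambda>\<omega>. c + Mb * indicator A \<omega>)"
    proof (rule integral_mono[OF iW iA])
      fix \<omega> assume \<omega>: "\<omega> \<in> space M"
      have "W e0 \<omega> \<le> Mb" using bnds e0 \<omega> by auto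
      then show "W e0 \<omega> \<le> c + Mb * indicator A \<omega>"
        using \<omega> c by (cases "c \<le> W e0 \<omega>") (auto simp: A_def indicator_def)
    qed
    also have "\<dots> = c + Mb * p"
    proof -
      have i1: "integrable M (\<lambda>_. c)" by simp
      have i2: "integrable M (\<lambda>\<omega>. Mb * indicator A \<omega>)"
        using A by (intro integrable_mult_right integrable_real_indicator) (auto simp: P.emeasure_finite less_top[symmetric])
      have "integral\<^sup>L M (\<lambda>\<omega>. c + Mb * indicator A \<omega>) = integral\<^sup>L M (\<lambda>_. c) + integral\<^sup>L M (\<lambda>\<omega>. Mb * indicator A \<omega>)"
        by (rule Bochner_Integration.integral_add[OF i1 i2])
      also have "integral\<^sup>L M (\<lambda>_. c) = c" by (simp add: P.prob_space)
      also have "integral\<^sup>L M (\<lambda>\<omega>. Mb * indicator A \<omega>) = Mb * measure M (A \<inter> space M)"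
        by (simp add: integral_indicator)
      also have "A \<inter> space M = A" using A sets.sets_into_space by blast
      finally show ?thesis by (simp add: p_def A_def)
    qed
    finally have "1 \<le> c + Mb * p" .
    then have "1/2 \<le> Mb * p" by (simp add: c_def)
    show ?thesis
    proof (rule ccontr)
      assume "\<not> 0 < p"
      then have "Mb * p \<le> 0" using Mb by (simp add: mult_nonneg_nonpos)
      then show False using \<open>1/2 \<le> Mb * p\<close> by simp
    qed
  qed
  define \<delta> where "\<delta> = p\<^sup>2/4"
  have \<delta>: "\<delta> > 0" using p by (simp add: \<delta>_def)
  define C2 where "C2 = sqrt (8 * (4 * sqrt (real CARD('d))) powr (real CARD('d) + \<alpha>) / (c*\<delta>*2^CARD('d)))"
  have C2: "C2 > 0" unfolding C2_def using c \<delta> by (intro real_sqrt_gt_zero divide_pos_pos mult_pos_pos) auto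
  have ind': "P.indep_vars (\<lambda>_. borel) W edges" using ind by simp
  have \<alpha>0: "0 \<le> \<alpha>" using assms(8) by simp
  show ?thesis
  proof (intro exI[of _ C2] conjI allI impI C2)
    fix \<theta> :: real assume \<theta>: "\<theta> > 1 / real CARD('d)"
    have dpos: "real CARD('d) > 0" by simp
    have \<theta>0: "\<theta> \<ge> 0" using \<theta> dpos by (smt (verit) divide_pos_pos)
    have \<beta>: "real CARD('d) * \<theta> > 1" using \<theta> dpos by (simp add: field_simps)
    define Bm where "Bm m = bad M W c \<delta> \<theta> m" for m
    have Bm_sets[measurable]: "Bm m \<in> sets M" for m unfolding Bm_def by (rule bad_meas[OF meas])
    have summ: "summable (\<lambda>m. measure M (Bm m))"
    proof (rule summable_comparison_test'[where N=1])
      show "summable (\<lambda>m. real (m+1) * (2^((m+1)*CARD('d)) * ((16/(p^4/4)\<^sup>2)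
            * exp (-((p^4/4)/2) * (real m * ln 2) powr (real CARD('d) * \<theta>)))))"
        by (rule summable_bound) (use p \<beta> in auto)
      fix m :: nat assume m: "1 \<le> m"
      have "measure M (Bm m) \<le> real (m+1) * (2^((m+1)*CARD('d)) * ((16/(p^4/4)\<^sup>2)
            * exp (-((p^4/4)/2) * (real m * ln 2) powr (real CARD('d) * \<theta>))))"
        unfolding Bm_def \<delta>_def by (rule P.prob_bad_bound[OF meas ind' pe p \<theta>0 m])
      then show "norm (measure M (Bm m)) \<le> real (m+1) * (2^((m+1)*CARD('d)) * ((16/(p^4/4)\<^sup>2)
            * exp (-((p^4/4)/2) * (real m * ln 2) powr (real CARD('d) * \<theta>))))" by simp
    qed
    have AEev: "AE \<omega> in M. eventually (\<lambda>n. \<omega> \<in> space M - Bm n) sequentially"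
      by (rule borel_cantelli_AE1[OF Bm_sets _ summ]) (simp add: P.emeasure_finite less_top[symmetric])
    define m0 where "m0 \<omega> = (SUP m. if \<omega> \<in> Bm m then ereal (real m + 1) else 1)" for \<omega>
    have m0_ge: "(if \<omega> \<in> Bm m then ereal (real m + 1) else 1) \<le> m0 \<omega>" for \<omega> m
      unfolding m0_def by (rule SUP_upper) simp
    show "\<exists>m0 :: 'w \<Rightarrow> ereal. m0 \<in> borel_measurable M \<and>
       (\<forall>\<omega>\<in>space M. 1 \<le> m0 \<omega>) \<and>
       (AE \<omega> in M. m0 \<omega> \<noteq> \<infinity>) \<and>
       (AE \<omega> in M. \<forall>(m::nat) (n::nat) (f::int^'d \<Rightarrow> real) (g::int^'d \<Rightarrow> real).
          ereal (real m) > m0 \<omega> \<and> \<theta> * log 2 (real m * ln 2) \<le> real n \<and> n \<le> m \<longrightarrow>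
          (\<Sum>x\<in>box (2^m) 0. f x * (g x - avg (box (2^m) 0) g))
          \<le> (\<Sum>z\<in>centres m n. \<Sum>x\<in>box (2^n) z. f x * (g x - avg (box (2^n) z) g))
             + C2 * sqrt (energy W \<omega> \<alpha> (box (2^m) 0) g)
               * (\<Sum>k\<in>{n..<m}. 2 powr (real k * (real CARD('d) + \<alpha>) / 2)
                   * sqrt (\<Sum>y\<in>centres m k. (avg (box (2^k) y) f)\<^sup>2)))"
    proof (intro exI[of _ m0] conjI)
      show "m0 \<in> borel_measurable M" unfolding m0_def
        by (rule borel_measurable_SUP) auto
      show "\<forall>\<omega>\<in>space M. 1 \<le> m0 \<omega>"
      proof
        fix \<omega> assume "\<omega> \<in> space M"
        have "1 \<le> (if \<omega> \<in> Bm 0 then ereal (real 0 + 1) else 1)" by simp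
        then show "1 \<le> m0 \<omega>" using m0_ge[of \<omega> 0] by (rule order_trans)
      qed
      show "AE \<omega> in M. m0 \<omega> \<noteq> \<infinity>"
        using AEev
      proof eventually_elim
        fix \<omega> assume "eventually (\<lambda>n. \<omega> \<in> space M - Bm n) sequentially"
        then obtain N where N: "\<And>n. N \<le> n \<Longrightarrow> \<omega> \<in> space M - Bm n" by (auto simp: eventually_sequentially)
        have "m0 \<omega> \<le> ereal (real N + 1)" unfolding m0_def
        proof (rule SUP_least)
          fix m :: nat
          show "(if \<omega> \<in> Bm m then ereal (real m + 1) else 1) \<le> ereal (real N + 1)"
          proof (cases "\<omega> \<in> Bm m")
            case True then have "m < N" using N by (meson DiffD2 not_le)
            then show ?thesis using True by simp
          next
            case False then show ?thesis by simp
          qed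
        qed
        then show "m0 \<omega> \<noteq> \<infinity>" by auto
      qed
      show "AE \<omega> in M. \<forall>(m::nat) (n::nat) (f::int^'d \<Rightarrow> real) (g::int^'d \<Rightarrow> real).
          ereal (real m) > m0 \<omega> \<and> \<theta> * log 2 (real m * ln 2) \<le> real n \<and> n \<le> m \<longrightarrow>
          (\<Sum>x\<in>box (2^m) 0. f x * (g x - avg (box (2^m) 0) g))
          \<le> (\<Sum>z\<in>centres m n. \<Sum>x\<in>box (2^n) z. f x * (g x - avg (box (2^n) z) g))
             + C2 * sqrt (energy W \<omega> \<alpha> (box (2^m) 0) g)
               * (\<Sum>k\<in>{n..<m}. 2 powr (real k * (real CARD('d) + \<alpha>) / 2)
                   * sqrt (\<Sum>y\<in>centres m k. (avg (box (2^k) y) f)\<^sup>2))"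
      proof (rule AE_I2, intro allI impI)
        fix \<omega> m n and f g :: "int^'d \<Rightarrow> real"
        assume \<omega>: "\<omega> \<in> space M"
          and H: "ereal (real m) > m0 \<omega> \<and> \<theta> * log 2 (real m * ln 2) \<le> real n \<and> n \<le> m"
        have nm: "n \<le> m" using H by simp
        have nb: "\<omega> \<notin> bad M W c \<delta> \<theta> m"
        proof
          assume "\<omega> \<in> bad M W c \<delta> \<theta> m"
          then have "ereal (real m + 1) \<le> m0 \<omega>" using m0_ge[of \<omega> m] by (simp add: Bm_def)
          moreover have "m0 \<omega> < ereal (real m)" using H by simp
          ultimately have "ereal (real m + 1) < ereal (real m)" by (rule order.strict_trans1)
          then show False by simp
        qed
        have Wpos: "\<forall>x\<in>box (2^m) 0. \<forall>z\<in>box (2^m) (0::int^'d). x \<noteq> z \<longrightarrow> 0 \<le> W {x,z} \<omega>"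
          using bnds \<omega> by (auto dest: edge_mem)
        have good: "\<forall>j. n < j \<and> j \<le> m \<longrightarrow> (\<forall>y\<in>centres m j. good_blk W \<omega> c \<delta> (box (2^j) (y::int^'d)))"
        proof (intro allI impI ballI)
          fix j and y :: "int^'d" assume j: "n < j \<and> j \<le> m" and y: "y \<in> centres m j"
          have "j \<in> levs \<theta> m" using j H by (auto simp: levs_def)
          then show "good_blk W \<omega> c \<delta> (box (2^j) y)" by (rule good_of_not_bad[OF \<omega> nb _ y])
        qed
        show "(\<Sum>x\<in>box (2^m) 0. f x * (g x - avg (box (2^m) 0) g))
          \<le> (\<Sum>z\<in>centres m n. \<Sum>x\<in>box (2^n) z. f x * (g x - avg (box (2^n) z) g))
             + C2 * sqrt (energy W \<omega> \<alpha> (box (2^m) 0) g)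
               * (\<Sum>k\<in>{n..<m}. 2 powr (real k * (real CARD('d) + \<alpha>) / 2)
                   * sqrt (\<Sum>y\<in>centres m k. (avg (box (2^k) y) f)\<^sup>2))"
          unfolding C2_def by (rule det_main[OF Wpos c \<delta> \<alpha>0 nm good])
      qed
    qed
  qed
qed

end
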